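(* Let $X\subseteq\mathbb{R}^n$ be nonempty, closed and convex, with some $D_X>0$ such that $\|u-v\|^2\le D_X^2$ for all $u,v\in X$. Let $F(x)=\mathbb{E}[F(x,\omega)]$ and assume: (A1) $F$ is $L$-Lipschitz continuous and monotone on $\mathbb{R}^n$; (A2) the solution set $X^*$ of VI$(X,F)$ is nonempty and compact and there is $C>0$ with $\|F(x^* )\|\le C$ for all $x^*\in X^*$; (A4) the state-dependent noise condition described in the context holds with constants $\nu_1,\nu_2\ge0$. Consider the scheme (v-SSE): for $k\ge0$, $$x_{k+\frac12}=\Pi_X\big(x_k-\gamma\bar F_k\big),\qquad x_{k+1}=\Pi_{C_k}\big(x_k-\gamma\bar F_{k+\frac12}\big),$$ where $\bar F_k=\frac1{N_k}\sum_{j=1}^{N_k}F(x_k,\omega_{j,k})$, $\bar F_{k+\frac12}=\frac1{N_k}\sum_{j=1}^{N_k}F(x_{k+\frac12},\omega_{j,k+\frac12})$, $C_k=\{y:(x_k-\gamma\bar F_k-x_{k+\frac12})^T(y-x_{k+\frac12})\le0\}$, with $0<\gamma\le\frac1{\sqrt2\,\tilde L}$, $\tilde L^2\triangleq L^2+\frac{4\nu_1^2}{N_0}$, and $\{N_k\}$ non-decreasing with $\sum_{k=1}^\infty\frac1{N_k}<M$ for some finite $M$. Let $\bar x_K=\frac1K\sum_{k=0}^{K-1}x_{k+\frac12}$. Then: (a) $\mathbb{E}[G(\bar x_K)]\le\mathcal{O}(1/K)$ for any $K$; (b) if $N_k\triangleq\lfloor k^a\rfloor$ with $a>1$, the oracle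 complexity to ensure $\mathbb{E}[G(\bar x_K)]\le\epsilon$ satisfies $\sum_{k=1}^KN_k\le\mathcal{O}(1/\epsilon^{a+1})$.
   Context: VI$(X,F)$: find $x^*\in X$ with $F(x^* )^T(x-x^* )\ge0$ for all $x\in X$. $\Pi_S$ is Euclidean projection onto $S$. Gap function: $G(x)\triangleq\sup_{y\in X}F(y)^T(x-y)$. Noise condition (A4): with $\mathcal{F}_k$ the history up to iteration $k$ and $\mathcal{F}_{k+\frac12}$ that history plus the samples at $x_k$, each sample error $w_k=F(x_k,\omega)-F(x_k)$, $w_{k+\frac12}=F(x_{k+\frac12},\omega)-F(x_{k+\frac12})$ has zero conditional mean given $\mathcal{F}_k$, resp. $\mathcal{F}_{k+\frac12}$, and conditional second moments bounded by $\nu_1^2\|x_k\|^2+\nu_2^2$, resp. $\nu_1^2\|x_{k+\frac12}\|^2+\nu_2^2$, a.s.; samples within a batch are independent given the history. Oracle complexity means the total number $\sum_kN_k$ of sampled map evaluations. *)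

theory Defs
  imports "HOL-Analysis.Analysis" "HOL-Probability.Probability"
begin

definition vi_sol :: "'a::euclidean_space set \<Rightarrow> ('a \<Rightarrow> 'a) \<Rightarrow> 'a set" where
  "vi_sol X F = {xs \<in> X. \<forall>x\<in>X. F xs \<bullet> (x - xs) \<ge> 0}"

definition gap :: "'a::euclidean_space set \<Rightarrow> ('a \<Rightarrow> 'a) \<Rightarrow> 'a \<Rightarrow> real" where
  "gap X F x = (SUP y\<in>X. F y \<bullet> (x - y))"

definition monotone_map :: "('a::euclidean_space \<Rightarrow> 'a) \<Rightarrow> bool" where
  "monotone_map F \<longleftrightarrow> (\<forall>x y. (F x - F y) \<bullet> (x - y) \<ge> 0)"

definition gen_sigma :: "'o measure \<Rightarrow> 'w measure \<Rightarrow> ('o \<Rightarrow> 'w) set \<Rightarrow> 'o measure" where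
  "gen_sigma M W fs = sigma (space M) {f -` B \<inter> space M | f B. f \<in> fs \<and> B \<in> sets W}"

text \<open>History F_k: all samples drawn in iterations 0..k-1 (x_0 is deterministic).
  s j i = omega_{j,i} (sample j at x_i), sh j i = omega_{j,i+1/2} (sample j at x_{i+1/2}).\<close>
definition hist :: "'o measure \<Rightarrow> 'w measure \<Rightarrow> (nat \<Rightarrow> nat) \<Rightarrow> (nat \<Rightarrow> nat \<Rightarrow> 'o \<Rightarrow> 'w)
    \<Rightarrow> (nat \<Rightarrow> nat \<Rightarrow> 'o \<Rightarrow> 'w) \<Rightarrow> nat \<Rightarrow> 'o measure" where
  "hist M W N s sh k = gen_sigma M W
     ({s j i | j i. i < k \<and> j < N i} \<union> {sh j i | j i. i < k \<and> j < N i})"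

definition hist_half :: "'o measure \<Rightarrow> 'w measure \<Rightarrow> (nat \<Rightarrow> nat) \<Rightarrow> (nat \<Rightarrow> nat \<Rightarrow> 'o \<Rightarrow> 'w)
    \<Rightarrow> (nat \<Rightarrow> nat \<Rightarrow> 'o \<Rightarrow> 'w) \<Rightarrow> nat \<Rightarrow> 'o measure" where
  "hist_half M W N s sh k = gen_sigma M W
     ({s j i | j i. i < k \<and> j < N i} \<union> {sh j i | j i. i < k \<and> j < N i} \<union> {s j k | j. j < N k})"

definition cond_indep :: "'o measure \<Rightarrow> 'o measure \<Rightarrow> 'w measure \<Rightarrow> 'i set \<Rightarrow> ('i \<Rightarrow> 'o \<Rightarrow> 'w) \<Rightarrow> bool" where
  "cond_indep M Fs W I Y \<longleftrightarrow>
     (\<forall>J A. J \<subseteq> I \<and> finite J \<and> J \<noteq> {} \<and> (\<forall>j\<in>J. A j \<in> sets W) \<longrightarrow>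
        (AE \<omega> in M. real_cond_exp M Fs (indicator (\<Inter>j\<in>J. Y j -` A j \<inter> space M)) \<omega>
                    = (\<Prod>j\<in>J. real_cond_exp M Fs (indicator (Y j -` A j \<inter> space M)) \<omega>)))"

text \<open>Noise condition (A4) for one batch: errors e j (j < n) of samples drawn at the point z,
  relative to the sigma algebra Fs (history).\<close>
definition noise_cond :: "'o measure \<Rightarrow> 'o measure \<Rightarrow> real \<Rightarrow> real \<Rightarrow> nat
    \<Rightarrow> (nat \<Rightarrow> 'o \<Rightarrow> 'a::euclidean_space) \<Rightarrow> ('o \<Rightarrow> 'a) \<Rightarrow> bool" where
  "noise_cond M Fs \<nu>1 \<nu>2 n e z \<longleftrightarrow>
     (\<forall>j<n. integrable M (e j) \<and>
        (\<forall>b\<in>Basis. AE \<omega> in M. real_cond_exp M Fs (\<lambda>\<omega>. e j \<omega> \<bullet> b) \<omega> = 0) \<and>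
        (AE \<omega> in M. nn_cond_exp M Fs (\<lambda>\<omega>. ennreal ((norm (e j \<omega>))\<^sup>2)) \<omega>
                    \<le> ennreal (\<nu>1\<^sup>2 * (norm (z \<omega>))\<^sup>2 + \<nu>2\<^sup>2)))"

end

theory Submission
  imports Defs
begin

lemma closest_point_charI:
  fixes S :: "'a::euclidean_space set"
  assumes "convex S" "closed S" "x \<in> S" "\<And>y. y \<in> S \<Longrightarrow> (a - x) \<bullet> (y - x) \<le> 0"
  shows "closest_point S a = x"
proof -
  have "\<forall>z\<in>S. dist a x \<le> dist a z"
  proof
    fix z assume z: "z \<in> S"
    have "(dist a z)\<^sup>2 = (norm ((a - x) - (z - x)))\<^sup>2" by (simp add: dist_norm)
    also have "\<dots> = (norm (a - x))\<^sup>2 + (norm (z - x))\<^sup>2 - 2 * ((a - x) \<bullet> (z - x))"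
      by (simp add: power2_norm_eq_inner inner_diff_left inner_diff_right inner_commute)
    also have "\<dots> \<ge> (norm (a - x))\<^sup>2" using assms(4)[OF z] zero_le_power2[of "norm (z - x)"] by linarith
    finally have "(dist a x)\<^sup>2 \<le> (dist a z)\<^sup>2" by (simp add: dist_norm)
    then show "dist a x \<le> dist a z" by (simp add: power2_le_iff_abs_le)
  qed
  then show ?thesis using closest_point_unique[OF assms(1-3)] by simp
qed

lemma proj_half:
  fixes c h z :: "'a::euclidean_space"
  shows "closest_point {y. c \<bullet> (y - h) \<le> 0} z =
     (if c \<bullet> (z - h) \<le> 0 then z else z - ((c \<bullet> (z - h)) / (c \<bullet> c)) *\<^sub>R c)"
proof -
  have cv: "convex {y. c \<bullet> (y - h) \<le> 0}"
    by (simp add: inner_diff_right convex_halfspace_le)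
  have cl: "closed {y. c \<bullet> (y - h) \<le> 0}"
    by (simp add: inner_diff_right closed_halfspace_le)
  show ?thesis
  proof (cases "c \<bullet> (z - h) \<le> 0")
    case True
    then show ?thesis by (simp add: closest_point_self)
  next
    case False
    then have c0: "c \<noteq> 0" by auto
    then have cc: "c \<bullet> c > 0" by simp
    let ?t = "(c \<bullet> (z - h)) / (c \<bullet> c)"
    have "closest_point {y. c \<bullet> (y - h) \<le> 0} z = z - ?t *\<^sub>R c"
    proof (rule closest_point_charI[OF cv cl])
      have "c \<bullet> (z - ?t *\<^sub>R c - h) = c \<bullet> (z - h) - ?t * (c \<bullet> c)"
        by (simp add: inner_diff_right algebra_simps)
      also have "\<dots> = 0" using cc by simp
      finally have e0: "c \<bullet> (z - ?t *\<^sub>R c - h) = 0" .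
      then show "z - ?t *\<^sub>R c \<in> {y. c \<bullet> (y - h) \<le> 0}" by simp
      fix y assume y: "y \<in> {y. c \<bullet> (y - h) \<le> 0}"
      have "(z - (z - ?t *\<^sub>R c)) \<bullet> (y - (z - ?t *\<^sub>R c)) = ?t * (c \<bullet> (y - h) - c \<bullet> (z - ?t *\<^sub>R c - h))"
        by (simp add: inner_diff_right inner_diff_left algebra_simps)
      also have "\<dots> = ?t * (c \<bullet> (y - h))" using e0 by simp
      also have "\<dots> \<le> 0"
      proof -
        have "?t \<ge> 0" using False cc by simp
        then show ?thesis using y mult_nonneg_nonpos by blast
      qed
      finally show "(z - (z - ?t *\<^sub>R c)) \<bullet> (y - (z - ?t *\<^sub>R c)) \<le> 0" .
    qed
    then show ?thesis using False by simp
  qed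
qed


lemma emeasure_distr_density_ind:
  fixes T :: "'o \<Rightarrow> 'b" and phi :: "'o \<Rightarrow> real"
  assumes T: "T \<in> measurable M N"
    and phi: "integrable M phi" "\<And>\<omega>. phi \<omega> \<ge> 0"
    and E: "E \<in> sets N"
  shows "emeasure (distr (density M (\<lambda>\<omega>. ennreal (phi \<omega>))) N T) E
       = ennreal (\<integral>\<omega>. phi \<omega> * indicator E (T \<omega>) \<partial>M)"
proof -
  have [measurable]: "phi \<in> borel_measurable M" using phi by auto
  have TE: "T -` E \<inter> space M \<in> sets M" using T E by (simp add: measurable_sets)
  have "emeasure (distr (density M (\<lambda>\<omega>. ennreal (phi \<omega>))) N T) E
      = emeasure (density M (\<lambda>\<omega>. ennreal (phi \<omega>))) (T -` E \<inter> space M)"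
    using T E by (simp add: emeasure_distr)
  also have "\<dots> = (\<integral>\<^sup>+ \<omega>. ennreal (phi \<omega>) * indicator (T -` E \<inter> space M) \<omega> \<partial>M)"
    using TE by (simp add: emeasure_density)
  also have "\<dots> = (\<integral>\<^sup>+ \<omega>. ennreal (phi \<omega> * indicator E (T \<omega>)) \<partial>M)"
    by (rule nn_integral_cong) (auto simp: indicator_def)
  also have "\<dots> = ennreal (\<integral>\<omega>. phi \<omega> * indicator E (T \<omega>) \<partial>M)"
  proof (rule nn_integral_eq_integral)
    have "integrable M (\<lambda>\<omega>. phi \<omega> * indicator (T -` E \<inter> space M) \<omega>)"
      using integrable_real_mult_indicator[OF TE phi(1)] by simp
    moreover have "\<And>\<omega>. \<omega> \<in> space M \<Longrightarrow> phi \<omega> * indicator (T -` E \<inter> space M) \<omega> = phi \<omega> * indicator E (T \<omega>)"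
      by (auto simp: indicator_def)
    ultimately show "integrable M (\<lambda>\<omega>. phi \<omega> * indicator E (T \<omega>))"
      using Bochner_Integration.integrable_cong[where M=M and N=M and f="\<lambda>\<omega>. phi \<omega> * indicator (T -` E \<inter> space M) \<omega>" and g="\<lambda>\<omega>. phi \<omega> * indicator E (T \<omega>)"] by simp
    show "AE \<omega> in M. 0 \<le> phi \<omega> * indicator E (T \<omega>)" using phi(2) by auto
  qed
  finally show ?thesis .
qed

lemma rect_ext:
  fixes T :: "'o \<Rightarrow> 'a::euclidean_space \<times> 'w" and phi psi :: "'o \<Rightarrow> real" and g :: "'a \<times> 'w \<Rightarrow> real"
  assumes T: "T \<in> measurable M (borel \<Otimes>\<^sub>M W)"
    and phi: "integrable M phi" "\<And>\<omega>. phi \<omega> \<ge> 0"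
    and psi: "integrable M psi" "\<And>\<omega>. psi \<omega> \<ge> 0"
    and rect: "\<And>B A. B \<in> sets borel \<Longrightarrow> A \<in> sets W \<Longrightarrow>
       (\<integral>\<omega>. phi \<omega> * indicator (B \<times> A) (T \<omega>) \<partial>M) = (\<integral>\<omega>. psi \<omega> * indicator (B \<times> A) (T \<omega>) \<partial>M)"
    and g: "g \<in> borel_measurable (borel \<Otimes>\<^sub>M W)"
  shows "(\<integral>\<omega>. phi \<omega> * g (T \<omega>) \<partial>M) = (\<integral>\<omega>. psi \<omega> * g (T \<omega>) \<partial>M)"
proof -
  have [measurable]: "phi \<in> borel_measurable M" "psi \<in> borel_measurable M" using phi psi by auto
  let ?E = "{a \<times> b | a b. a \<in> sets (borel::'a measure) \<and> b \<in> sets W}"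
  let ?m1 = "distr (density M (\<lambda>\<omega>. ennreal (phi \<omega>))) (borel \<Otimes>\<^sub>M W) T"
  let ?m2 = "distr (density M (\<lambda>\<omega>. ennreal (psi \<omega>))) (borel \<Otimes>\<^sub>M W) T"
  have T': "T \<in> measurable (density M (\<lambda>\<omega>. ennreal (phi \<omega>))) (borel \<Otimes>\<^sub>M W)"
           "T \<in> measurable (density M (\<lambda>\<omega>. ennreal (psi \<omega>))) (borel \<Otimes>\<^sub>M W)"
    using T by auto
  have eq: "?m1 = ?m2"
  proof (rule measure_eqI_generator_eq[OF Int_stable_pair_measure_generator[of borel W], where \<Omega> = "UNIV \<times> space W" and A = "\<lambda>_. UNIV \<times> space W"])
    show "?E \<subseteq> Pow (UNIV \<times> space W)"
      using sets.space_closed[of W] by auto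
    show "sets ?m1 = sigma_sets (UNIV \<times> space W) ?E"
      by (simp add: sets_pair_measure)
    show "sets ?m2 = sigma_sets (UNIV \<times> space W) ?E"
      by (simp add: sets_pair_measure)
    fix X assume "X \<in> ?E"
    then obtain B A where X: "X = B \<times> A" "B \<in> sets borel" "A \<in> sets W" by auto
    then have XS: "X \<in> sets (borel \<Otimes>\<^sub>M W)" by auto
    show "emeasure ?m1 X = emeasure ?m2 X"
      using emeasure_distr_density_ind[OF T phi XS] emeasure_distr_density_ind[OF T psi XS]
        rect[OF X(2,3)] X(1) by simp
  next
    have "UNIV \<times> space W \<in> ?E" by (intro CollectI exI[of _ UNIV] exI[of _ "space W"]) auto
    then show "range (\<lambda>_. UNIV \<times> space W) \<subseteq> ?E" by auto
    show "(\<Union>i. UNIV \<times> space W) = UNIV \<times> space W" by simp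
    have XS: "UNIV \<times> space W \<in> sets (borel \<Otimes>\<^sub>M W)"
      by (metis sets.top space_borel space_pair_measure)
    show "emeasure ?m1 (UNIV \<times> space W) \<noteq> \<infinity>"
      using emeasure_distr_density_ind[OF T phi XS] by simp
  qed
  have "(\<integral>\<omega>. phi \<omega> * g (T \<omega>) \<partial>M) = integral\<^sup>L ?m1 g"
    using g T' integral_density[of "\<lambda>x. g (T x)" M phi] integral_distr[OF T'(1) g]
    by (simp add: measurable_compose[OF T g] phi)
  also have "\<dots> = integral\<^sup>L ?m2 g" using eq by simp
  also have "\<dots> = (\<integral>\<omega>. psi \<omega> * g (T \<omega>) \<partial>M)"
    using g T' integral_density[of "\<lambda>x. g (T x)" M psi] integral_distr[OF T'(2) g]
    by (simp add: measurable_compose[OF T g] psi)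
  finally show ?thesis .
qed


lemma sq_int_mult:
  fixes f g :: "'o \<Rightarrow> real"
  assumes "integrable M (\<lambda>x. (f x)\<^sup>2)" "integrable M (\<lambda>x. (g x)\<^sup>2)"
    "f \<in> borel_measurable M" "g \<in> borel_measurable M"
  shows "integrable M (\<lambda>x. f x * g x)"
proof (rule Bochner_Integration.integrable_bound[where M=M and f="\<lambda>x. (f x)\<^sup>2 + (g x)\<^sup>2"])
  show "integrable M (\<lambda>x. (f x)\<^sup>2 + (g x)\<^sup>2)" using assms by auto
  show "(\<lambda>x. f x * g x) \<in> borel_measurable M" using assms by auto
  show "AE x in M. norm (f x * g x) \<le> norm ((f x)\<^sup>2 + (g x)\<^sup>2)"
  proof (rule AE_I2)
    fix x
    have "2 * \<bar>f x\<bar> * \<bar>g x\<bar> \<le> (f x)\<^sup>2 + (g x)\<^sup>2"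
      using sum_squares_bound[of "\<bar>f x\<bar>" "\<bar>g x\<bar>"] by (simp add: power2_abs)
    moreover have "\<bar>f x\<bar> * \<bar>g x\<bar> \<ge> 0" by simp
    ultimately have "\<bar>f x\<bar> * \<bar>g x\<bar> \<le> (f x)\<^sup>2 + (g x)\<^sup>2" by linarith
    then show "norm (f x * g x) \<le> norm ((f x)\<^sup>2 + (g x)\<^sup>2)"
      by (simp add: abs_mult)
  qed
qed

lemma sq_int_int:
  fixes f :: "'o \<Rightarrow> real"
  assumes "finite_measure M" "integrable M (\<lambda>x. (f x)\<^sup>2)" "f \<in> borel_measurable M"
  shows "integrable M f"
proof -
  have "integrable M (\<lambda>x. 1::real)" using finite_measure.integrable_const[OF assms(1)] .
  then show ?thesis using sq_int_mult[OF assms(2), of "\<lambda>_. 1"] assms(3) by simp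
qed

lemma int_bdd_mult:
  fixes f c :: "'o \<Rightarrow> real"
  assumes "integrable M f" "c \<in> borel_measurable M" "\<And>\<omega>. \<bar>c \<omega>\<bar> \<le> 1"
  shows "integrable M (\<lambda>\<omega>. c \<omega> * f \<omega>)"
proof (rule Bochner_Integration.integrable_bound[where M=M and f=f])
  show "integrable M f" by fact
  show "(\<lambda>\<omega>. c \<omega> * f \<omega>) \<in> borel_measurable M" using assms by auto
  show "AE x in M. norm (c x * f x) \<le> norm (f x)"
  proof (rule AE_I2)
    fix x
    have "\<bar>c x\<bar> * \<bar>f x\<bar> \<le> 1 * \<bar>f x\<bar>" by (rule mult_right_mono[OF assms(3)]) simp
    then show "norm (c x * f x) \<le> norm (f x)" by (simp add: abs_mult)
  qed
qed

lemma ind_bdd: "\<bar>indicator A x :: real\<bar> \<le> 1"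
  by (simp add: indicator_def)

lemma cross_zero:
  fixes Z :: "'o \<Rightarrow> 'a::euclidean_space" and t :: "nat \<Rightarrow> 'o \<Rightarrow> 'w" and g h :: "'a \<times> 'w \<Rightarrow> real"
  assumes M: "prob_space M" and sub: "subalgebra M F"
    and Z: "Z \<in> borel_measurable F"
    and ti: "t i \<in> measurable M W" and tj: "t j \<in> measurable M W"
    and ci: "cond_indep M F W I t" and ij: "i \<in> I" "j \<in> I" "i \<noteq> j"
    and g: "g \<in> borel_measurable (borel \<Otimes>\<^sub>M W)" and h: "h \<in> borel_measurable (borel \<Otimes>\<^sub>M W)"
    and gsq: "integrable M (\<lambda>\<omega>. (g (Z \<omega>, t i \<omega>))\<^sup>2)"
    and hsq: "integrable M (\<lambda>\<omega>. (h (Z \<omega>, t j \<omega>))\<^sup>2)"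
    and mean0: "AE \<omega> in M. real_cond_exp M F (\<lambda>\<omega>. g (Z \<omega>, t i \<omega>)) \<omega> = 0"
  shows "(\<integral>\<omega>. g (Z \<omega>, t i \<omega>) * h (Z \<omega>, t j \<omega>) \<partial>M) = 0"
proof -
  interpret P: prob_space M by fact
  interpret S: finite_measure_subalgebra M F by unfold_locales (fact sub)
  have ZM[measurable]: "Z \<in> borel_measurable M" using measurable_from_subalg[OF sub Z] .
  have [measurable]: "t i \<in> measurable M W" "t j \<in> measurable M W" using ti tj by auto
  have Ti: "(\<lambda>\<omega>. (Z \<omega>, t i \<omega>)) \<in> measurable M (borel \<Otimes>\<^sub>M W)" by measurable
  have Tj: "(\<lambda>\<omega>. (Z \<omega>, t j \<omega>)) \<in> measurable M (borel \<Otimes>\<^sub>M W)" by measurable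
  define fi where "fi \<omega> = g (Z \<omega>, t i \<omega>)" for \<omega>
  define hj where "hj \<omega> = h (Z \<omega>, t j \<omega>)" for \<omega>
  have fiM[measurable]: "fi \<in> borel_measurable M" unfolding fi_def using measurable_compose[OF Ti g] by simp
  have hjM[measurable]: "hj \<in> borel_measurable M" unfolding hj_def using measurable_compose[OF Tj h] by simp
  have fisq: "integrable M (\<lambda>\<omega>. (fi \<omega>)\<^sup>2)" using gsq by (simp add: fi_def)
  have hjsq: "integrable M (\<lambda>\<omega>. (hj \<omega>)\<^sup>2)" using hsq by (simp add: hj_def)
  have fiI: "integrable M fi" using sq_int_int[OF P.finite_measure_axioms fisq fiM] .
  have mean0': "AE \<omega> in M. real_cond_exp M F fi \<omega> = 0" using mean0 by (simp add: fi_def[abs_def])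
  define pr where "pr A k = real_cond_exp M F (indicator (t k -` A \<inter> space M))" for A k
  have prF[measurable]: "pr A k \<in> borel_measurable F" for A k unfolding pr_def by simp
  have prM[measurable]: "pr A k \<in> borel_measurable M" for A k unfolding pr_def by simp
  have indM: "A \<in> sets W \<Longrightarrow> (indicator (t k -` A \<inter> space M) :: 'o \<Rightarrow> real) \<in> borel_measurable M"
    if "t k \<in> measurable M W" for A k
    using that by (intro borel_measurable_indicator) (simp add: measurable_sets)
  have indI: "A \<in> sets W \<Longrightarrow> integrable M (indicator (t k -` A \<inter> space M) :: 'o \<Rightarrow> real)"
    if "t k \<in> measurable M W" for A k
    using that by (intro P.integrable_const_bound[where B=1] indM) (auto simp: indicator_def)
  have ci2: "AE \<omega> in M. real_cond_exp M F (indicator ((t i -` A \<inter> space M) \<inter> (t j -` A' \<inter> space M))) \<omega>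
              = pr A i \<omega> * pr A' j \<omega>" if A: "A \<in> sets W" "A' \<in> sets W" for A A'
  proof -
    define AA where "AA k = (if k = i then A else A')" for k
    have "{i, j} \<subseteq> I \<and> finite {i, j} \<and> {i, j} \<noteq> {} \<and> (\<forall>k\<in>{i, j}. AA k \<in> sets W)"
      using ij A by (auto simp: AA_def)
    then have "AE \<omega> in M. real_cond_exp M F (indicator (\<Inter>k\<in>{i, j}. t k -` AA k \<inter> space M)) \<omega>
                    = (\<Prod>k\<in>{i, j}. real_cond_exp M F (indicator (t k -` AA k \<inter> space M)) \<omega>)"
      using ci unfolding cond_indep_def by blast
    then show ?thesis using ij(3) by (simp add: AA_def pr_def)
  qed
  have step1: "(\<integral>\<omega>. (indicator B0 (Z \<omega>) * indicator A0 (t j \<omega>)) * fi \<omega> \<partial>M) = 0"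
    if B0: "B0 \<in> sets borel" and A0: "A0 \<in> sets W" for B0 A0
  proof -
    define q where "q \<omega> = min 1 (max 0 (pr A0 j \<omega>))" for \<omega>
    have qF[measurable]: "q \<in> borel_measurable F" unfolding q_def by measurable
    have qM[measurable]: "q \<in> borel_measurable M" using measurable_from_subalg[OF sub qF] .
    have q01: "0 \<le> q \<omega>" "q \<omega> \<le> 1" for \<omega> unfolding q_def by auto
    have qae: "AE \<omega> in M. q \<omega> = pr A0 j \<omega>"
    proof -
      have "AE \<omega> in M. pr A0 j \<omega> \<ge> 0" unfolding pr_def
        by (rule S.real_cond_exp_ge_c[OF indI[OF tj A0]]) (auto simp: indicator_def)
      moreover have "AE \<omega> in M. pr A0 j \<omega> \<le> 1" unfolding pr_def
        by (rule S.real_cond_exp_le_c[OF indI[OF tj A0]]) (auto simp: indicator_def)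
      ultimately show ?thesis by eventually_elim (auto simp: q_def)
    qed
    have B0M[measurable]: "B0 \<in> sets borel" by fact
    have A0M[measurable]: "A0 \<in> sets W" by fact
    have rect: "(\<integral>\<omega>. (indicator B0 (Z \<omega>) * indicator A0 (t j \<omega>)) * indicator (B \<times> A) (Z \<omega>, t i \<omega>) \<partial>M)
             = (\<integral>\<omega>. (indicator B0 (Z \<omega>) * q \<omega>) * indicator (B \<times> A) (Z \<omega>, t i \<omega>) \<partial>M)"
      if B: "B \<in> sets borel" and A: "A \<in> sets W" for B A
    proof -
      have [measurable]: "B \<in> sets borel" "A \<in> sets W" using B A by auto
      define c where "c \<omega> = (indicator (B0 \<inter> B) (Z \<omega>) :: real)" for \<omega>
      have cF[measurable]: "c \<in> borel_measurable F" unfolding c_def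
        by (rule measurable_compose[OF Z borel_measurable_indicator]) (use B B0 in auto)
      have cM[measurable]: "c \<in> borel_measurable M" using measurable_from_subalg[OF sub cF] .
      have cb: "\<bar>c \<omega>\<bar> \<le> 1" for \<omega> unfolding c_def by (rule ind_bdd)
      let ?I = "(t i -` A \<inter> space M) \<inter> (t j -` A0 \<inter> space M)"
      have IM: "?I \<in> sets M" by (intro sets.Int measurable_sets[OF ti A] measurable_sets[OF tj A0])
      have IindI: "integrable M (indicator ?I :: 'o \<Rightarrow> real)"
        using IM by (intro P.integrable_const_bound[where B=1]) (auto simp: indicator_def)
      have "(\<integral>\<omega>. (indicator B0 (Z \<omega>) * indicator A0 (t j \<omega>)) * indicator (B \<times> A) (Z \<omega>, t i \<omega>) \<partial>M)
          = (\<integral>\<omega>. c \<omega> * indicator ?I \<omega> \<partial>M)"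
        by (rule Bochner_Integration.integral_cong) (auto simp: c_def indicator_def)
      also have "\<dots> = (\<integral>\<omega>. c \<omega> * real_cond_exp M F (indicator ?I) \<omega> \<partial>M)"
        by (rule S.real_cond_exp_intg(2)[symmetric]) (auto intro!: int_bdd_mult[OF IindI] cb simp: IM)
      also have "\<dots> = (\<integral>\<omega>. c \<omega> * (pr A i \<omega> * pr A0 j \<omega>) \<partial>M)"
        using ci2[OF A A0] by (intro integral_cong_AE) (auto elim: AE_mp)
      also have "\<dots> = (\<integral>\<omega>. (c \<omega> * q \<omega>) * pr A i \<omega> \<partial>M)"
        using qae by (intro integral_cong_AE) (auto elim: AE_mp)
      also have "\<dots> = (\<integral>\<omega>. (c \<omega> * q \<omega>) * indicator (t i -` A \<inter> space M) \<omega> \<partial>M)"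
        unfolding pr_def
      proof (rule S.real_cond_exp_intg(2))
        show "integrable M (\<lambda>\<omega>. c \<omega> * q \<omega> * indicator (t i -` A \<inter> space M) \<omega>)"
          using cb q01 by (intro int_bdd_mult[OF indI[OF ti A]]) (auto simp: abs_mult intro: mult_le_one)
        show "(\<lambda>\<omega>. c \<omega> * q \<omega>) \<in> borel_measurable F" by measurable
        show "(indicator (t i -` A \<inter> space M) :: 'o \<Rightarrow> real) \<in> borel_measurable M" using indM[OF ti A] .
      qed
      also have "\<dots> = (\<integral>\<omega>. (indicator B0 (Z \<omega>) * q \<omega>) * indicator (B \<times> A) (Z \<omega>, t i \<omega>) \<partial>M)"
        by (rule Bochner_Integration.integral_cong) (auto simp: c_def indicator_def)
      finally show ?thesis .
    qed
    have "(\<integral>\<omega>. (indicator B0 (Z \<omega>) * indicator A0 (t j \<omega>)) * g (Z \<omega>, t i \<omega>) \<partial>M)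
        = (\<integral>\<omega>. (indicator B0 (Z \<omega>) * q \<omega>) * g (Z \<omega>, t i \<omega>) \<partial>M)"
    proof (rule rect_ext[OF Ti _ _ _ _ rect g])
      show "integrable M (\<lambda>\<omega>. indicator B0 (Z \<omega>) * indicator A0 (t j \<omega>) :: real)"
        by (intro P.integrable_const_bound[where B=1]) (auto simp: indicator_def)
      show "integrable M (\<lambda>\<omega>. indicator B0 (Z \<omega>) * q \<omega>)"
        using q01 by (intro P.integrable_const_bound[where B=1]) (auto simp: indicator_def)
    qed (auto simp: q01)
    also have "\<dots> = (\<integral>\<omega>. (indicator B0 (Z \<omega>) * q \<omega>) * real_cond_exp M F fi \<omega> \<partial>M)"
      unfolding fi_def[symmetric]
    proof (rule S.real_cond_exp_intg(2)[symmetric])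
      show "integrable M (\<lambda>\<omega>. indicator B0 (Z \<omega>) * q \<omega> * fi \<omega>)"
        using q01 by (intro int_bdd_mult[OF fiI]) (auto simp: indicator_def)
      show "(\<lambda>\<omega>. indicator B0 (Z \<omega>) * q \<omega>) \<in> borel_measurable F"
        by (intro borel_measurable_times qF measurable_compose[OF Z borel_measurable_indicator] B0)
    qed auto
    also have "\<dots> = 0"
      using mean0' by (subst integral_cong_AE[where g="\<lambda>_. 0"]) (auto elim: AE_mp)
    finally show ?thesis by (simp add: fi_def)
  qed
  define fp where "fp \<omega> = max 0 (fi \<omega>)" for \<omega>
  define fm where "fm \<omega> = max 0 (- fi \<omega>)" for \<omega>
  have fpI: "integrable M fp" unfolding fp_def using fiI by auto
  have fmI: "integrable M fm" unfolding fm_def using fiI by auto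
  have eq2: "(\<integral>\<omega>. fp \<omega> * h (Z \<omega>, t j \<omega>) \<partial>M) = (\<integral>\<omega>. fm \<omega> * h (Z \<omega>, t j \<omega>) \<partial>M)"
  proof (rule rect_ext[OF Tj fpI _ fmI _ _ h])
    fix B :: "'a set" and A assume B: "B \<in> sets borel" and A: "A \<in> sets W"
    have [measurable]: "B \<in> sets borel" "A \<in> sets W" using B A by auto
    have i1: "integrable M (\<lambda>\<omega>. fp \<omega> * indicator (B \<times> A) (Z \<omega>, t j \<omega>))"
      using fpI by (subst mult.commute, intro int_bdd_mult) (auto simp: indicator_def)
    have i2: "integrable M (\<lambda>\<omega>. fm \<omega> * indicator (B \<times> A) (Z \<omega>, t j \<omega>))"
      using fmI by (subst mult.commute, intro int_bdd_mult) (auto simp: indicator_def)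
    have "(\<integral>\<omega>. fp \<omega> * indicator (B \<times> A) (Z \<omega>, t j \<omega>) \<partial>M) - (\<integral>\<omega>. fm \<omega> * indicator (B \<times> A) (Z \<omega>, t j \<omega>) \<partial>M)
        = (\<integral>\<omega>. fp \<omega> * indicator (B \<times> A) (Z \<omega>, t j \<omega>) - fm \<omega> * indicator (B \<times> A) (Z \<omega>, t j \<omega>) \<partial>M)"
      using i1 i2 by simp
    also have "\<dots> = (\<integral>\<omega>. (indicator B (Z \<omega>) * indicator A (t j \<omega>)) * fi \<omega> \<partial>M)"
      by (rule Bochner_Integration.integral_cong) (auto simp: fp_def fm_def indicator_def max_def)
    also have "\<dots> = 0" using step1[OF B A] .
    finally show "(\<integral>\<omega>. fp \<omega> * indicator (B \<times> A) (Z \<omega>, t j \<omega>) \<partial>M) = (\<integral>\<omega>. fm \<omega> * indicator (B \<times> A) (Z \<omega>, t j \<omega>) \<partial>M)"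
      by simp
  qed (auto simp: fp_def fm_def)
  have fhI: "integrable M (\<lambda>\<omega>. fi \<omega> * hj \<omega>)" using sq_int_mult[OF fisq hjsq fiM hjM] .
  have fphI: "integrable M (\<lambda>\<omega>. fp \<omega> * hj \<omega>)"
  proof (rule Bochner_Integration.integrable_bound[OF fhI])
    show "(\<lambda>\<omega>. fp \<omega> * hj \<omega>) \<in> borel_measurable M" unfolding fp_def by measurable
    show "AE x in M. norm (fp x * hj x) \<le> norm (fi x * hj x)"
      by (rule AE_I2) (auto simp: fp_def abs_mult max_def intro: mult_right_mono mult_nonpos_nonneg)
  qed
  have fmhI: "integrable M (\<lambda>\<omega>. fm \<omega> * hj \<omega>)"
  proof (rule Bochner_Integration.integrable_bound[OF fhI])
    show "(\<lambda>\<omega>. fm \<omega> * hj \<omega>) \<in> borel_measurable M" unfolding fm_def by measurable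
    show "AE x in M. norm (fm x * hj x) \<le> norm (fi x * hj x)"
      by (rule AE_I2) (auto simp: fm_def abs_mult max_def intro: mult_right_mono mult_nonpos_nonneg)
  qed
  have "(\<integral>\<omega>. fi \<omega> * hj \<omega> \<partial>M) = (\<integral>\<omega>. fp \<omega> * hj \<omega> - fm \<omega> * hj \<omega> \<partial>M)"
    by (rule Bochner_Integration.integral_cong) (auto simp: fp_def fm_def max_def algebra_simps)
  also have "\<dots> = (\<integral>\<omega>. fp \<omega> * hj \<omega> \<partial>M) - (\<integral>\<omega>. fm \<omega> * hj \<omega> \<partial>M)"
    using fphI fmhI by simp
  also have "\<dots> = 0" using eq2 by (simp add: hj_def)
  finally show ?thesis by (simp add: fi_def hj_def)
qed


lemma noise_sq:
  fixes e :: "nat \<Rightarrow> 'o \<Rightarrow> 'a::euclidean_space" and Z :: "'o \<Rightarrow> 'a"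
  assumes M: "prob_space M" and sub: "subalgebra M F"
    and nc: "noise_cond M F \<nu>1 \<nu>2 n e Z" and j: "j < n"
    and ZM: "Z \<in> borel_measurable M" and Zsq: "integrable M (\<lambda>\<omega>. (norm (Z \<omega>))\<^sup>2)"
  shows "integrable M (\<lambda>\<omega>. (norm (e j \<omega>))\<^sup>2)"
    and "(\<integral>\<omega>. (norm (e j \<omega>))\<^sup>2 \<partial>M) \<le> \<nu>1\<^sup>2 * (\<integral>\<omega>. (norm (Z \<omega>))\<^sup>2 \<partial>M) + \<nu>2\<^sup>2"
proof -
  interpret P: prob_space M by fact
  interpret S: finite_measure_subalgebra M F by unfold_locales (fact sub)
  have eI: "integrable M (e j)" using nc j unfolding noise_cond_def by auto
  have eM[measurable]: "e j \<in> borel_measurable M" using eI by auto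
  have ae: "AE \<omega> in M. nn_cond_exp M F (\<lambda>\<omega>. ennreal ((norm (e j \<omega>))\<^sup>2)) \<omega>
                    \<le> ennreal (\<nu>1\<^sup>2 * (norm (Z \<omega>))\<^sup>2 + \<nu>2\<^sup>2)"
    using nc j unfolding noise_cond_def by auto
  have bI: "integrable M (\<lambda>\<omega>. \<nu>1\<^sup>2 * (norm (Z \<omega>))\<^sup>2 + \<nu>2\<^sup>2)" using Zsq by auto
  have "(\<integral>\<^sup>+\<omega>. ennreal ((norm (e j \<omega>))\<^sup>2) \<partial>M)
      = (\<integral>\<^sup>+\<omega>. nn_cond_exp M F (\<lambda>\<omega>. ennreal ((norm (e j \<omega>))\<^sup>2)) \<omega> \<partial>M)"
    using S.nn_cond_exp_intg[of "\<lambda>_. 1" "\<lambda>\<omega>. ennreal ((norm (e j \<omega>))\<^sup>2)"] by simp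
  also have "\<dots> \<le> (\<integral>\<^sup>+\<omega>. ennreal (\<nu>1\<^sup>2 * (norm (Z \<omega>))\<^sup>2 + \<nu>2\<^sup>2) \<partial>M)"
    by (rule nn_integral_mono_AE[OF ae])
  also have "\<dots> = ennreal (\<integral>\<omega>. \<nu>1\<^sup>2 * (norm (Z \<omega>))\<^sup>2 + \<nu>2\<^sup>2 \<partial>M)"
    by (rule nn_integral_eq_integral[OF bI]) auto
  finally have le: "(\<integral>\<^sup>+\<omega>. ennreal ((norm (e j \<omega>))\<^sup>2) \<partial>M) \<le> ennreal (\<integral>\<omega>. \<nu>1\<^sup>2 * (norm (Z \<omega>))\<^sup>2 + \<nu>2\<^sup>2 \<partial>M)" .
  show I: "integrable M (\<lambda>\<omega>. (norm (e j \<omega>))\<^sup>2)"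
    by (rule integrableI_nonneg) (use le in \<open>auto simp: top.not_eq_extremum intro: le_less_trans\<close>)
  have "ennreal (\<integral>\<omega>. (norm (e j \<omega>))\<^sup>2 \<partial>M) = (\<integral>\<^sup>+\<omega>. ennreal ((norm (e j \<omega>))\<^sup>2) \<partial>M)"
    by (rule nn_integral_eq_integral[OF I, symmetric]) auto
  moreover have "0 \<le> (\<integral>\<omega>. \<nu>1\<^sup>2 * (norm (Z \<omega>))\<^sup>2 + \<nu>2\<^sup>2 \<partial>M)"
    by (rule integral_nonneg_AE) auto
  ultimately have "(\<integral>\<omega>. (norm (e j \<omega>))\<^sup>2 \<partial>M) \<le> (\<integral>\<omega>. \<nu>1\<^sup>2 * (norm (Z \<omega>))\<^sup>2 + \<nu>2\<^sup>2 \<partial>M)"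
    using le ennreal_le_iff by metis
  also have "\<dots> = \<nu>1\<^sup>2 * (\<integral>\<omega>. (norm (Z \<omega>))\<^sup>2 \<partial>M) + \<nu>2\<^sup>2"
    using Zsq by (simp add: P.prob_space)
  finally show "(\<integral>\<omega>. (norm (e j \<omega>))\<^sup>2 \<partial>M) \<le> \<nu>1\<^sup>2 * (\<integral>\<omega>. (norm (Z \<omega>))\<^sup>2 \<partial>M) + \<nu>2\<^sup>2" .
qed

lemma batch_var:
  fixes Z :: "'o \<Rightarrow> 'a::euclidean_space" and t :: "nat \<Rightarrow> 'o \<Rightarrow> 'w" and g :: "'a \<times> 'w \<Rightarrow> 'a"
  assumes M: "prob_space M" and sub: "subalgebra M F" and Z: "Z \<in> borel_measurable F"
    and t: "\<And>j. t j \<in> measurable M W" and ci: "cond_indep M F W {..<n} t" and n: "n \<ge> 1"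
    and g: "g \<in> borel_measurable (borel \<Otimes>\<^sub>M W)"
    and nc: "noise_cond M F \<nu>1 \<nu>2 n (\<lambda>j \<omega>. g (Z \<omega>, t j \<omega>)) Z"
    and Zsq: "integrable M (\<lambda>\<omega>. (norm (Z \<omega>))\<^sup>2)"
  shows "integrable M (\<lambda>\<omega>. (norm ((1 / real n) *\<^sub>R (\<Sum>j<n. g (Z \<omega>, t j \<omega>))))\<^sup>2)"
    and "(\<integral>\<omega>. (norm ((1 / real n) *\<^sub>R (\<Sum>j<n. g (Z \<omega>, t j \<omega>))))\<^sup>2 \<partial>M)
          \<le> (\<nu>1\<^sup>2 * (\<integral>\<omega>. (norm (Z \<omega>))\<^sup>2 \<partial>M) + \<nu>2\<^sup>2) / real n"
proof -
  interpret P: prob_space M by fact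
  define e where "e j \<omega> = g (Z \<omega>, t j \<omega>)" for j \<omega>
  define B where "B = \<nu>1\<^sup>2 * (\<integral>\<omega>. (norm (Z \<omega>))\<^sup>2 \<partial>M) + \<nu>2\<^sup>2"
  have ZM[measurable]: "Z \<in> borel_measurable M" using measurable_from_subalg[OF sub Z] .
  have [measurable]: "t j \<in> measurable M W" for j using t by auto
  have Tj: "(\<lambda>\<omega>. (Z \<omega>, t j \<omega>)) \<in> measurable M (borel \<Otimes>\<^sub>M W)" for j by measurable
  have eM[measurable]: "e j \<in> borel_measurable M" for j unfolding e_def using measurable_compose[OF Tj g] by simp
  have nc': "noise_cond M F \<nu>1 \<nu>2 n e Z" using nc unfolding e_def[abs_def] .
  have esq: "integrable M (\<lambda>\<omega>. (norm (e j \<omega>))\<^sup>2)" "(\<integral>\<omega>. (norm (e j \<omega>))\<^sup>2 \<partial>M) \<le> B" if "j < n" for j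
    using noise_sq[OF M sub nc' that ZM Zsq] unfolding B_def by auto
  have compsq: "integrable M (\<lambda>\<omega>. (e j \<omega> \<bullet> b)\<^sup>2)" if "j < n" "b \<in> Basis" for j b
  proof (rule Bochner_Integration.integrable_bound[OF esq(1)[OF that(1)]])
    show "(\<lambda>\<omega>. (e j \<omega> \<bullet> b)\<^sup>2) \<in> borel_measurable M" by measurable
    show "AE \<omega> in M. norm ((e j \<omega> \<bullet> b)\<^sup>2) \<le> norm ((norm (e j \<omega>))\<^sup>2)"
    proof (rule AE_I2)
      fix \<omega>
      have "\<bar>e j \<omega> \<bullet> b\<bar> \<le> norm (e j \<omega>)" using Basis_le_norm[OF that(2)] .
      then have "\<bar>e j \<omega> \<bullet> b\<bar>\<^sup>2 \<le> (norm (e j \<omega>))\<^sup>2" by (rule power_mono) simp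
      then have "(e j \<omega> \<bullet> b)\<^sup>2 \<le> (norm (e j \<omega>))\<^sup>2" by (simp add: power2_abs)
      then show "norm ((e j \<omega> \<bullet> b)\<^sup>2) \<le> norm ((norm (e j \<omega>))\<^sup>2)" by simp
    qed
  qed
  have inner_eq: "e i \<omega> \<bullet> e j \<omega> = (\<Sum>b\<in>Basis. (e i \<omega> \<bullet> b) * (e j \<omega> \<bullet> b))" for i j \<omega>
    by (rule euclidean_inner)
  have innerI: "integrable M (\<lambda>\<omega>. e i \<omega> \<bullet> e j \<omega>)" if "i < n" "j < n" for i j
    unfolding inner_eq
    by (intro Bochner_Integration.integrable_sum sq_int_mult compsq that) auto
  have cross: "(\<integral>\<omega>. e i \<omega> \<bullet> e j \<omega> \<partial>M) = 0" if ij: "i < n" "j < n" "i \<noteq> j" for i j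
  proof -
    have "(\<integral>\<omega>. e i \<omega> \<bullet> e j \<omega> \<partial>M) = (\<Sum>b\<in>Basis. (\<integral>\<omega>. (e i \<omega> \<bullet> b) * (e j \<omega> \<bullet> b) \<partial>M))"
      unfolding inner_eq
      by (intro Bochner_Integration.integral_sum sq_int_mult compsq ij) auto
    also have "\<dots> = 0"
    proof (intro sum.neutral ballI)
      fix b :: 'a assume b: "b \<in> Basis"
      have gb: "(\<lambda>p. g p \<bullet> b) \<in> borel_measurable (borel \<Otimes>\<^sub>M W)" using g by measurable
      have m0: "AE \<omega> in M. real_cond_exp M F (\<lambda>\<omega>. g (Z \<omega>, t i \<omega>) \<bullet> b) \<omega> = 0"
        using nc ij b unfolding noise_cond_def by auto
      show "(\<integral>\<omega>. (e i \<omega> \<bullet> b) * (e j \<omega> \<bullet> b) \<partial>M) = 0"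
        using cross_zero[OF M sub Z t t ci _ _ ij(3) gb gb] compsq[OF ij(1) b] compsq[OF ij(2) b] m0 ij
        unfolding e_def by simp
    qed
    finally show ?thesis .
  qed
  have pw: "(norm ((1 / real n) *\<^sub>R (\<Sum>j<n. g (Z \<omega>, t j \<omega>))))\<^sup>2
          = (1 / real n)\<^sup>2 * (\<Sum>i<n. \<Sum>j<n. e i \<omega> \<bullet> e j \<omega>)" for \<omega>
  proof -
    have "(norm ((1 / real n) *\<^sub>R (\<Sum>j<n. g (Z \<omega>, t j \<omega>))))\<^sup>2 = (1 / real n)\<^sup>2 * (norm (\<Sum>j<n. e j \<omega>))\<^sup>2"
      unfolding norm_scaleR power_mult_distrib power2_abs e_def ..
    also have "(norm (\<Sum>j<n. e j \<omega>))\<^sup>2 = (\<Sum>i<n. \<Sum>j<n. e i \<omega> \<bullet> e j \<omega>)"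
      unfolding power2_norm_eq_inner inner_sum_left inner_sum_right by (rule sum.swap)
    finally show ?thesis .
  qed
  have sumI: "integrable M (\<lambda>\<omega>. (\<Sum>i<n. \<Sum>j<n. e i \<omega> \<bullet> e j \<omega>))"
    by (intro Bochner_Integration.integrable_sum innerI) auto
  show "integrable M (\<lambda>\<omega>. (norm ((1 / real n) *\<^sub>R (\<Sum>j<n. g (Z \<omega>, t j \<omega>))))\<^sup>2)"
    unfolding pw using sumI by simp
  have "(\<integral>\<omega>. (\<Sum>i<n. \<Sum>j<n. e i \<omega> \<bullet> e j \<omega>) \<partial>M) = (\<Sum>i<n. \<Sum>j<n. (\<integral>\<omega>. e i \<omega> \<bullet> e j \<omega> \<partial>M))"
  proof -
    have "(\<integral>\<omega>. (\<Sum>i<n. \<Sum>j<n. e i \<omega> \<bullet> e j \<omega>) \<partial>M) = (\<Sum>i<n. (\<integral>\<omega>. (\<Sum>j<n. e i \<omega> \<bullet> e j \<omega>) \<partial>M))"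
      by (rule Bochner_Integration.integral_sum) (auto intro!: Bochner_Integration.integrable_sum innerI)
    also have "\<dots> = (\<Sum>i<n. \<Sum>j<n. (\<integral>\<omega>. e i \<omega> \<bullet> e j \<omega> \<partial>M))"
      by (intro sum.cong[OF refl] Bochner_Integration.integral_sum) (auto intro!: innerI)
    finally show ?thesis .
  qed
  also have "\<dots> = (\<Sum>i<n. (\<integral>\<omega>. (norm (e i \<omega>))\<^sup>2 \<partial>M))"
  proof (rule sum.cong[OF refl])
    fix i assume i: "i \<in> {..<n}"
    have "(\<Sum>j<n. (\<integral>\<omega>. e i \<omega> \<bullet> e j \<omega> \<partial>M)) = (\<Sum>j<n. if j = i then (\<integral>\<omega>. (norm (e i \<omega>))\<^sup>2 \<partial>M) else 0)"
      using i by (intro sum.cong[OF refl]) (auto simp: cross power2_norm_eq_inner)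
    also have "\<dots> = (\<integral>\<omega>. (norm (e i \<omega>))\<^sup>2 \<partial>M)" using i by simp
    finally show "(\<Sum>j<n. (\<integral>\<omega>. e i \<omega> \<bullet> e j \<omega> \<partial>M)) = (\<integral>\<omega>. (norm (e i \<omega>))\<^sup>2 \<partial>M)" .
  qed
  also have "\<dots> \<le> (\<Sum>i<n. B)" by (intro sum_mono esq) auto
  also have "\<dots> = real n * B" by simp
  finally have le: "(\<integral>\<omega>. (\<Sum>i<n. \<Sum>j<n. e i \<omega> \<bullet> e j \<omega>) \<partial>M) \<le> real n * B" .
  have "(\<integral>\<omega>. (norm ((1 / real n) *\<^sub>R (\<Sum>j<n. g (Z \<omega>, t j \<omega>))))\<^sup>2 \<partial>M)
      = (1 / real n)\<^sup>2 * (\<integral>\<omega>. (\<Sum>i<n. \<Sum>j<n. e i \<omega> \<bullet> e j \<omega>) \<partial>M)"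
    unfolding pw by simp
  also have "\<dots> \<le> (1 / real n)\<^sup>2 * (real n * B)" by (rule mult_left_mono[OF le]) simp
  also have "\<dots> = B / real n" using n by (simp add: power2_eq_square field_simps)
  finally show "(\<integral>\<omega>. (norm ((1 / real n) *\<^sub>R (\<Sum>j<n. g (Z \<omega>, t j \<omega>))))\<^sup>2 \<partial>M)
          \<le> (\<nu>1\<^sup>2 * (\<integral>\<omega>. (norm (Z \<omega>))\<^sup>2 \<partial>M) + \<nu>2\<^sup>2) / real n" unfolding B_def .
qed


lemma gen_sigma_space: "space (gen_sigma M W S) = space M"
  unfolding gen_sigma_def by (rule space_measure_of) auto

lemma gen_sigma_sets: "sets (gen_sigma M W S) = sigma_sets (space M) {f -` B \<inter> space M | f B. f \<in> S \<and> B \<in> sets W}"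
  unfolding gen_sigma_def by (rule sets_measure_of) auto

lemma gen_sigma_sub:
  assumes "\<And>f. f \<in> S \<Longrightarrow> f \<in> measurable M W"
  shows "subalgebra M (gen_sigma M W S)"
  unfolding subalgebra_def
proof
  show "sets (gen_sigma M W S) \<subseteq> sets M"
    unfolding gen_sigma_sets
    by (rule sets.sigma_sets_subset) (auto dest: assms intro: measurable_sets)
  show "space (gen_sigma M W S) = space M" by (rule gen_sigma_space)
qed

lemma gen_sigma_meas:
  assumes "f \<in> S" "f \<in> measurable M W"
  shows "f \<in> measurable (gen_sigma M W S) W"
proof (rule measurableI)
  fix x assume "x \<in> space (gen_sigma M W S)"
  then show "f x \<in> space W" using assms(2) by (auto simp: gen_sigma_space measurable_space)
next
  fix B assume "B \<in> sets W"
  then have "f -` B \<inter> space M \<in> {f -` B \<inter> space M | f B. f \<in> S \<and> B \<in> sets W}" using assms(1) by blast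
  then show "f -` B \<inter> space (gen_sigma M W S) \<in> sets (gen_sigma M W S)"
    unfolding gen_sigma_sets gen_sigma_space by (rule sigma_sets.Basic)
qed

lemma gen_sigma_mono:
  assumes "S \<subseteq> S'"
  shows "subalgebra (gen_sigma M W S') (gen_sigma M W S)"
  unfolding subalgebra_def gen_sigma_space
proof
  show "sets (gen_sigma M W S) \<subseteq> sets (gen_sigma M W S')"
    unfolding gen_sigma_sets using assms by (intro sigma_sets_mono') blast
qed simp

locale vsse =
  fixes X :: "'a::euclidean_space set"
    and F :: "'a \<Rightarrow> 'a"
    and Fs :: "'a \<Rightarrow> 'w \<Rightarrow> 'a"
    and P :: "'w measure"
    and M :: "'o measure"
    and s sh :: "nat \<Rightarrow> nat \<Rightarrow> 'o \<Rightarrow> 'w"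
    and N :: "nat \<Rightarrow> nat"
    and x xh :: "nat \<Rightarrow> 'o \<Rightarrow> 'a"
    and x0 :: 'a
    and L \<gamma> \<nu>1 \<nu>2 :: real
  assumes X_ne: "X \<noteq> {}" and X_closed: "closed X" and X_convex: "convex X"
    and X_diam: "\<exists>D>0. \<forall>u\<in>X. \<forall>v\<in>X. (norm (u - v))\<^sup>2 \<le> D\<^sup>2"
    and P_prob: "prob_space P"
    and Fs_meas: "(\<lambda>(z, w). Fs z w) \<in> borel_measurable (borel \<Otimes>\<^sub>M P)"
    and F_mean: "\<And>z. integrable P (Fs z) \<and> F z = (\<integral>w. Fs z w \<partial>P)"
    and A1_lip: "L-lipschitz_on UNIV F" and A1_mono: "monotone_map F"
    and A2_ne: "vi_sol X F \<noteq> {}" and A2_compact: "compact (vi_sol X F)"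
    and A2_bound: "\<exists>C>0. \<forall>xs\<in>vi_sol X F. norm (F xs) \<le> C"
    and M_prob: "prob_space M"
    and s_meas: "\<And>j k. s j k \<in> measurable M P" and sh_meas: "\<And>j k. sh j k \<in> measurable M P"
    and s_distr: "\<And>j k. distr M P (s j k) = P" and sh_distr: "\<And>j k. distr M P (sh j k) = P"
    and nu_nonneg: "\<nu>1 \<ge> 0" "\<nu>2 \<ge> 0"
    and A4_k: "\<And>k. noise_cond M (hist M P N s sh k) \<nu>1 \<nu>2 (N k)
                  (\<lambda>j \<omega>. Fs (x k \<omega>) (s j k \<omega>) - F (x k \<omega>)) (x k)"
    and A4_half: "\<And>k. noise_cond M (hist_half M P N s sh k) \<nu>1 \<nu>2 (N k)
                  (\<lambda>j \<omega>. Fs (xh k \<omega>) (sh j k \<omega>) - F (xh k \<omega>)) (xh k)"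
    and A4_indep_k: "\<And>k. cond_indep M (hist M P N s sh k) P {..<N k} (\<lambda>j. s j k)"
    and A4_indep_half: "\<And>k. cond_indep M (hist_half M P N s sh k) P {..<N k} (\<lambda>j. sh j k)"
    and N_pos: "\<And>k. N k \<ge> 1" and N_mono: "mono N"
    and N_sum: "\<exists>Mb. \<forall>K. (\<Sum>k=1..K. 1 / real (N k)) < Mb"
    and gamma_pos: "\<gamma> > 0"
    and gamma_le: "\<gamma> * (sqrt 2 * sqrt (L\<^sup>2 + 4 * \<nu>1\<^sup>2 / real (N 0))) \<le> 1"
    and x_init: "\<And>\<omega>. \<omega> \<in> space M \<Longrightarrow> x 0 \<omega> = x0"
    and xh_step: "\<And>k \<omega>. \<omega> \<in> space M \<Longrightarrow>
        xh k \<omega> = closest_point X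
          (x k \<omega> - \<gamma> *\<^sub>R ((1 / real (N k)) *\<^sub>R (\<Sum>j<N k. Fs (x k \<omega>) (s j k \<omega>))))"
    and x_step: "\<And>k \<omega>. \<omega> \<in> space M \<Longrightarrow>
        x (Suc k) \<omega> = closest_point
          {y. (x k \<omega> - \<gamma> *\<^sub>R ((1 / real (N k)) *\<^sub>R (\<Sum>j<N k. Fs (x k \<omega>) (s j k \<omega>))) - xh k \<omega>)
                \<bullet> (y - xh k \<omega>) \<le> 0}
          (x k \<omega> - \<gamma> *\<^sub>R ((1 / real (N k)) *\<^sub>R (\<Sum>j<N k. Fs (xh k \<omega>) (sh j k \<omega>))))"
begin

definition "SG k = {s j i | j i. i < k \<and> j < N i} \<union> {sh j i | j i. i < k \<and> j < N i}"
definition "SH k = SG k \<union> {s j k | j. j < N k}"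

lemma hist_eq: "hist M P N s sh k = gen_sigma M P (SG k)"
  unfolding hist_def SG_def ..
lemma hist_half_eq: "hist_half M P N s sh k = gen_sigma M P (SH k)"
  unfolding hist_half_def SH_def SG_def ..

lemma SG_meas: "f \<in> SG k \<Longrightarrow> f \<in> measurable M P"
  unfolding SG_def using s_meas sh_meas by auto
lemma SH_meas: "f \<in> SH k \<Longrightarrow> f \<in> measurable M P"
  unfolding SH_def using SG_meas s_meas by auto

lemma SG_SH: "SG k \<subseteq> SH k" unfolding SH_def by auto
lemma SH_SG: "SH k \<subseteq> SG (Suc k)" unfolding SH_def SG_def by (auto simp: less_Suc_eq)

lemma subG: "subalgebra M (hist M P N s sh k)"
  unfolding hist_eq by (rule gen_sigma_sub) (rule SG_meas)
lemma subH: "subalgebra M (hist_half M P N s sh k)"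
  unfolding hist_half_eq by (rule gen_sigma_sub) (rule SH_meas)
lemma subGH: "subalgebra (hist_half M P N s sh k) (hist M P N s sh k)"
  unfolding hist_eq hist_half_eq by (rule gen_sigma_mono[OF SG_SH])
lemma subHG: "subalgebra (hist M P N s sh (Suc k)) (hist_half M P N s sh k)"
  unfolding hist_eq hist_half_eq by (rule gen_sigma_mono[OF SH_SG])

lemma s_measH: "j < N k \<Longrightarrow> s j k \<in> measurable (hist_half M P N s sh k) P"
  unfolding hist_half_eq by (rule gen_sigma_meas[OF _ s_meas]) (auto simp: SH_def)
lemma s_measG: "j < N k \<Longrightarrow> s j k \<in> measurable (hist M P N s sh (Suc k)) P"
  unfolding hist_eq by (rule gen_sigma_meas[OF _ s_meas]) (auto simp: SG_def)
lemma sh_measG: "j < N k \<Longrightarrow> sh j k \<in> measurable (hist M P N s sh (Suc k)) P"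
  unfolding hist_eq by (rule gen_sigma_meas[OF _ sh_meas]) (auto simp: SG_def)

abbreviation "GG k \<equiv> hist M P N s sh k"
abbreviation "HH k \<equiv> hist_half M P N s sh k"

lemma space_GG: "space (GG k) = space M"
  unfolding hist_eq by (rule gen_sigma_space)
lemma space_HH: "space (HH k) = space M"
  unfolding hist_half_eq by (rule gen_sigma_space)

definition "pX = (SOME p. p \<in> X)"
lemma pX: "pX \<in> X" unfolding pX_def using X_ne by (simp add: some_in_eq)

definition "aa k \<omega> = (1 / real (N k)) *\<^sub>R (\<Sum>j<N k. Fs (x k \<omega>) (s j k \<omega>))"
definition "bb k \<omega> = (1 / real (N k)) *\<^sub>R (\<Sum>j<N k. Fs (xh k \<omega>) (sh j k \<omega>))"
definition "ww k \<omega> = aa k \<omega> - F (x k \<omega>)"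
definition "vv k \<omega> = bb k \<omega> - F (xh k \<omega>)"
definition "cc k \<omega> = x k \<omega> - \<gamma> *\<^sub>R aa k \<omega> - xh k \<omega>"
definition "Ck k \<omega> = {y. cc k \<omega> \<bullet> (y - xh k \<omega>) \<le> 0}"
definition "xt k \<omega> = closest_point (Ck k \<omega>) (x k \<omega> - \<gamma> *\<^sub>R F (xh k \<omega>))"

primrec uu :: "nat \<Rightarrow> 'o \<Rightarrow> 'a" where
  "uu 0 = (\<lambda>\<omega>. pX)"
| "uu (Suc k) = (\<lambda>\<omega>. closest_point X (uu k \<omega> + \<gamma> *\<^sub>R vv k \<omega>))"

lemma xh_eq: "\<omega> \<in> space M \<Longrightarrow> xh k \<omega> = closest_point X (x k \<omega> - \<gamma> *\<^sub>R aa k \<omega>)"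
  using xh_step unfolding aa_def by simp
lemma x_eq: "\<omega> \<in> space M \<Longrightarrow> x (Suc k) \<omega> = closest_point (Ck k \<omega>) (x k \<omega> - \<gamma> *\<^sub>R bb k \<omega>)"
  using x_step unfolding aa_def bb_def Ck_def cc_def by simp

lemma F_cont: "continuous_on UNIV F"
  by (rule lipschitz_on_continuous_on[OF A1_lip])
lemma F_borel: "F \<in> borel_measurable borel"
  by (rule borel_measurable_continuous_onI[OF F_cont])
lemma F_comp: "Z \<in> borel_measurable A \<Longrightarrow> (\<lambda>\<omega>. F (Z \<omega>)) \<in> borel_measurable A"
  using measurable_compose[OF _ F_borel] by blast
lemma cpX_borel: "closest_point X \<in> borel_measurable borel"
  by (rule borel_measurable_continuous_onI[OF continuous_on_closest_point[OF X_convex X_closed X_ne]])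
lemma cpX_comp: "Z \<in> borel_measurable A \<Longrightarrow> (\<lambda>\<omega>. closest_point X (Z \<omega>)) \<in> borel_measurable A"
  using measurable_compose[OF _ cpX_borel] by blast
lemma Fs_comp:
  assumes "Z \<in> borel_measurable A" "T \<in> measurable A P"
  shows "(\<lambda>\<omega>. Fs (Z \<omega>) (T \<omega>)) \<in> borel_measurable A"
  using measurable_compose[OF measurable_Pair[OF assms] Fs_meas] by simp

end

lemma projC_meas:
  fixes c h z :: "'o \<Rightarrow> 'a::euclidean_space"
  assumes [measurable]: "c \<in> borel_measurable A" "h \<in> borel_measurable A" "z \<in> borel_measurable A"
  shows "(\<lambda>\<omega>. closest_point {y. c \<omega> \<bullet> (y - h \<omega>) \<le> 0} (z \<omega>)) \<in> borel_measurable A"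
  unfolding proj_half by measurable

context vsse begin

lemma meas_xu: "x k \<in> borel_measurable (GG k) \<and> uu k \<in> borel_measurable (GG k)"
proof (induction k)
  case 0
  have "x 0 \<in> borel_measurable (GG 0) \<longleftrightarrow> (\<lambda>_. x0) \<in> borel_measurable (GG 0)"
    by (rule measurable_cong) (simp add: space_GG x_init)
  then show ?case by simp
next
  case (Suc k)
  have xG: "x k \<in> borel_measurable (GG k)" and uG: "uu k \<in> borel_measurable (GG k)" using Suc by auto
  have xH: "x k \<in> borel_measurable (HH k)" by (rule measurable_from_subalg[OF subGH xG])
  have aH: "aa k \<in> borel_measurable (HH k)"
    unfolding aa_def[abs_def]
    by (intro borel_measurable_scaleR borel_measurable_sum borel_measurable_const Fs_comp xH s_measH) auto
  have xhH: "xh k \<in> borel_measurable (HH k)"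
  proof -
    have "xh k \<in> borel_measurable (HH k) \<longleftrightarrow> (\<lambda>\<omega>. closest_point X (x k \<omega> - \<gamma> *\<^sub>R aa k \<omega>)) \<in> borel_measurable (HH k)"
      by (rule measurable_cong) (simp add: space_HH xh_eq)
    moreover have "(\<lambda>\<omega>. closest_point X (x k \<omega> - \<gamma> *\<^sub>R aa k \<omega>)) \<in> borel_measurable (HH k)"
      by (intro cpX_comp borel_measurable_diff borel_measurable_scaleR borel_measurable_const xH aH)
    ultimately show ?thesis by simp
  qed
  let ?G = "GG (Suc k)"
  have xG': "x k \<in> borel_measurable ?G" by (rule measurable_from_subalg[OF subHG xH])
  have aG': "aa k \<in> borel_measurable ?G" by (rule measurable_from_subalg[OF subHG aH])
  have xhG': "xh k \<in> borel_measurable ?G" by (rule measurable_from_subalg[OF subHG xhH])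
  have uG': "uu k \<in> borel_measurable ?G"
    by (rule measurable_from_subalg[OF subHG measurable_from_subalg[OF subGH uG]])
  have bG: "bb k \<in> borel_measurable ?G"
    unfolding bb_def[abs_def]
    by (intro borel_measurable_scaleR borel_measurable_sum borel_measurable_const Fs_comp xhG' sh_measG) auto
  have vG: "vv k \<in> borel_measurable ?G"
    unfolding vv_def[abs_def] by (intro borel_measurable_diff bG F_comp xhG')
  have cG: "cc k \<in> borel_measurable ?G"
    unfolding cc_def[abs_def] by (intro borel_measurable_diff borel_measurable_scaleR borel_measurable_const xG' aG' xhG')
  have "x (Suc k) \<in> borel_measurable ?G \<longleftrightarrow> (\<lambda>\<omega>. closest_point (Ck k \<omega>) (x k \<omega> - \<gamma> *\<^sub>R bb k \<omega>)) \<in> borel_measurable ?G"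
    by (rule measurable_cong) (simp add: space_GG x_eq)
  moreover have "(\<lambda>\<omega>. closest_point (Ck k \<omega>) (x k \<omega> - \<gamma> *\<^sub>R bb k \<omega>)) \<in> borel_measurable ?G"
    unfolding Ck_def
    by (intro projC_meas cG xhG' borel_measurable_diff borel_measurable_scaleR borel_measurable_const xG' bG)
  ultimately have "x (Suc k) \<in> borel_measurable ?G" by simp
  moreover have "uu (Suc k) \<in> borel_measurable ?G"
    by (simp, intro cpX_comp borel_measurable_add borel_measurable_scaleR borel_measurable_const uG' vG)
  ultimately show ?case by simp
qed

lemma x_measG: "x k \<in> borel_measurable (GG k)" using meas_xu by simp
lemma uu_measG: "uu k \<in> borel_measurable (GG k)" using meas_xu by simp
lemma x_measH: "x k \<in> borel_measurable (HH k)" by (rule measurable_from_subalg[OF subGH x_measG])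
lemma uu_measH: "uu k \<in> borel_measurable (HH k)" by (rule measurable_from_subalg[OF subGH uu_measG])
lemma aa_measH: "aa k \<in> borel_measurable (HH k)"
  unfolding aa_def[abs_def]
  by (intro borel_measurable_scaleR borel_measurable_sum borel_measurable_const Fs_comp x_measH s_measH) auto
lemma xh_measH: "xh k \<in> borel_measurable (HH k)"
proof -
  have "xh k \<in> borel_measurable (HH k) \<longleftrightarrow> (\<lambda>\<omega>. closest_point X (x k \<omega> - \<gamma> *\<^sub>R aa k \<omega>)) \<in> borel_measurable (HH k)"
    by (rule measurable_cong) (simp add: space_HH xh_eq)
  moreover have "(\<lambda>\<omega>. closest_point X (x k \<omega> - \<gamma> *\<^sub>R aa k \<omega>)) \<in> borel_measurable (HH k)"
    by (intro cpX_comp borel_measurable_diff borel_measurable_scaleR borel_measurable_const x_measH aa_measH)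
  ultimately show ?thesis by simp
qed
lemma xt_measH: "xt k \<in> borel_measurable (HH k)"
  unfolding xt_def[abs_def] Ck_def cc_def
  by (intro projC_meas borel_measurable_diff borel_measurable_scaleR borel_measurable_const
      x_measH aa_measH xh_measH F_comp)

lemma subM_meas: "f \<in> borel_measurable (HH k) \<Longrightarrow> f \<in> borel_measurable M"
  by (rule measurable_from_subalg[OF subH])
lemma subM_measG: "f \<in> borel_measurable (GG k) \<Longrightarrow> f \<in> borel_measurable M"
  by (rule measurable_from_subalg[OF subG])

lemma x_meas[measurable]: "x k \<in> borel_measurable M" by (rule subM_measG[OF x_measG])
lemma xh_meas[measurable]: "xh k \<in> borel_measurable M" by (rule subM_meas[OF xh_measH])
lemma uu_meas[measurable]: "uu k \<in> borel_measurable M" by (rule subM_measG[OF uu_measG])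
lemma xt_meas[measurable]: "xt k \<in> borel_measurable M" by (rule subM_meas[OF xt_measH])
lemma aa_meas[measurable]: "aa k \<in> borel_measurable M" by (rule subM_meas[OF aa_measH])
lemma bb_meas[measurable]: "bb k \<in> borel_measurable M"
  unfolding bb_def[abs_def]
  by (intro borel_measurable_scaleR borel_measurable_sum borel_measurable_const Fs_comp xh_meas sh_meas)
lemma F_x_meas[measurable]: "(\<lambda>\<omega>. F (x k \<omega>)) \<in> borel_measurable M" by (intro F_comp x_meas)
lemma F_xh_meas[measurable]: "(\<lambda>\<omega>. F (xh k \<omega>)) \<in> borel_measurable M" by (intro F_comp xh_meas)
lemma vv_meas[measurable]: "vv k \<in> borel_measurable M" unfolding vv_def[abs_def] by measurable
lemma ww_meas[measurable]: "ww k \<in> borel_measurable M" unfolding ww_def[abs_def] by measurable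

end


lemma sq_sum_le: "(norm (p + q :: 'a::real_inner))\<^sup>2 \<le> 2 * (norm p)\<^sup>2 + 2 * (norm q)\<^sup>2"
proof -
  have "0 \<le> (norm (p - q))\<^sup>2" by simp
  then show ?thesis
    by (simp add: power2_norm_eq_inner inner_add_left inner_add_right inner_diff_left inner_diff_right inner_commute)
qed

lemma norm_add_sq: "(norm (p + q :: 'a::real_inner))\<^sup>2 = (norm p)\<^sup>2 + 2 * (p \<bullet> q) + (norm q)\<^sup>2"
  unfolding power2_norm_eq_inner by (simp add: inner_add_left inner_add_right inner_commute)

lemma two_inner_le: "2 * (p \<bullet> q) \<le> (norm p)\<^sup>2 + (norm (q :: 'a::real_inner))\<^sup>2"
proof -
  have "0 \<le> (norm (p - q))\<^sup>2" by simp
  then show ?thesis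
    by (simp add: power2_norm_eq_inner inner_diff_left inner_diff_right inner_commute)
qed

lemma step_ineq:
  fixes X :: "'a::euclidean_space set" and F :: "'a \<Rightarrow> 'a"
  assumes X: "convex X" "closed X" "X \<noteq> {}"
    and lip: "L-lipschitz_on UNIV F" and mono: "monotone_map F" and gp: "\<gamma> > 0"
    and h: "h = closest_point X (z - \<gamma> *\<^sub>R a)"
    and C: "C = {y. (z - \<gamma> *\<^sub>R a - h) \<bullet> (y - h) \<le> 0}"
    and y: "y \<in> X"
  shows "2 * \<gamma> * (F y \<bullet> (h - y)) \<le> ((norm (z - y))\<^sup>2 + (norm (u - y))\<^sup>2)
        - ((norm (closest_point C (z - \<gamma> *\<^sub>R b) - y))\<^sup>2 + (norm (closest_point X (u + \<gamma> *\<^sub>R (b - F h)) - y))\<^sup>2)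
        + (2 * \<gamma>\<^sup>2 * L\<^sup>2 - 1) * (norm (z - h))\<^sup>2 + 2 * \<gamma>\<^sup>2 * (norm (a - F z))\<^sup>2 + 3 * \<gamma>\<^sup>2 * (norm (b - F h))\<^sup>2
        + 2 * \<gamma> * ((b - F h) \<bullet> (u - closest_point C (z - \<gamma> *\<^sub>R F h)))"
proof -
  define x' where "x' = closest_point C (z - \<gamma> *\<^sub>R b)"
  define xt where "xt = closest_point C (z - \<gamma> *\<^sub>R F h)"
  define v where "v = b - F h"
  define u' where "u' = closest_point X (u + \<gamma> *\<^sub>R v)"
  have Cc: "convex C" unfolding C by (simp add: inner_diff_right convex_halfspace_le)
  have Ccl: "closed C" unfolding C by (simp add: inner_diff_right closed_halfspace_le)
  have hC: "h \<in> C" unfolding C by simp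
  have Cne: "C \<noteq> {}" using hC by auto
  have yC: "y \<in> C" unfolding C h using closest_point_dot[OF X(1,2) y] by simp
  have F2: "((z - \<gamma> *\<^sub>R b) - x') \<bullet> (y - x') \<le> 0"
    unfolding x'_def by (rule closest_point_dot[OF Cc Ccl yC])
  have x'C: "x' \<in> C" unfolding x'_def by (rule closest_point_in_set[OF Ccl Cne])
  then have F3: "(z - \<gamma> *\<^sub>R a - h) \<bullet> (x' - h) \<le> 0" unfolding C by simp
  have F4: "norm (x' - xt) \<le> \<gamma> * norm v"
  proof -
    have "(z - \<gamma> *\<^sub>R b) - (z - \<gamma> *\<^sub>R F h) = - (\<gamma> *\<^sub>R v)" unfolding v_def by (simp add: algebra_simps)
    then have "dist (z - \<gamma> *\<^sub>R b) (z - \<gamma> *\<^sub>R F h) = \<gamma> * norm v" using gp by (simp add: dist_norm)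
    then show ?thesis
      using closest_point_lipschitz[OF Cc Ccl Cne, of "z - \<gamma> *\<^sub>R b" "z - \<gamma> *\<^sub>R F h"]
      unfolding x'_def xt_def by (simp add: dist_norm)
  qed
  have F5: "norm (u' - y) \<le> norm (u + \<gamma> *\<^sub>R v - y)"
    using closest_point_lipschitz[OF X, of "u + \<gamma> *\<^sub>R v" y] closest_point_self[OF y]
    unfolding u'_def by (simp add: dist_norm)
  have F6: "norm (F z - F h) \<le> L * norm (z - h)"
    by (rule lipschitz_on_normD[OF lip]) auto
  have L0: "L \<ge> 0" by (rule lipschitz_on_nonneg[OF lip])
  have F7: "(F h - F y) \<bullet> (h - y) \<ge> 0" using mono unfolding monotone_map_def by blast
  have A: "(norm (x' - y))\<^sup>2 \<le> (norm (z - y))\<^sup>2 - (norm (z - x'))\<^sup>2 + 2 * \<gamma> * (b \<bullet> (y - x'))"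
    using F2 by (simp add: power2_norm_eq_inner inner_diff_left inner_diff_right inner_commute algebra_simps)
  have B: "(norm (z - x'))\<^sup>2 \<ge> (norm (z - h))\<^sup>2 + (norm (x' - h))\<^sup>2 - 2 * \<gamma> * (a \<bullet> (x' - h))"
    using F3 by (simp add: power2_norm_eq_inner inner_diff_left inner_diff_right inner_commute algebra_simps)
  have AB: "2 * \<gamma> * (b \<bullet> (y - x')) + 2 * \<gamma> * (a \<bullet> (x' - h))
      = 2 * \<gamma> * ((a - F h) \<bullet> (x' - h)) - 2 * \<gamma> * (v \<bullet> (x' - xt)) - 2 * \<gamma> * (v \<bullet> (xt - h))
        + 2 * \<gamma> * (F h \<bullet> (y - h)) + 2 * \<gamma> * (v \<bullet> (y - h))"
    unfolding v_def by (simp add: inner_diff_left inner_diff_right inner_commute algebra_simps)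
  have C2: "2 * \<gamma> * ((a - F h) \<bullet> (x' - h)) \<le> \<gamma>\<^sup>2 * (norm (a - F h))\<^sup>2 + (norm (x' - h))\<^sup>2"
  proof -
    have "2 * ((\<gamma> *\<^sub>R (a - F h)) \<bullet> (x' - h)) \<le> (norm (\<gamma> *\<^sub>R (a - F h)))\<^sup>2 + (norm (x' - h))\<^sup>2"
      by (rule two_inner_le)
    moreover have "(norm (\<gamma> *\<^sub>R (a - F h)))\<^sup>2 = \<gamma>\<^sup>2 * (norm (a - F h))\<^sup>2"
      by (simp only: norm_scaleR power_mult_distrib power2_abs)
    moreover have "(\<gamma> *\<^sub>R (a - F h)) \<bullet> (x' - h) = \<gamma> * ((a - F h) \<bullet> (x' - h))"
      by (rule inner_scaleR_left)
    ultimately show ?thesis by linarith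
  qed
  have C3: "(norm (a - F h))\<^sup>2 \<le> 2 * L\<^sup>2 * (norm (z - h))\<^sup>2 + 2 * (norm (a - F z))\<^sup>2"
  proof -
    have "(norm (a - F h))\<^sup>2 \<le> 2 * (norm (F z - F h))\<^sup>2 + 2 * (norm (a - F z))\<^sup>2"
      using sq_sum_le[of "F z - F h" "a - F z"] by simp
    moreover have "(norm (F z - F h))\<^sup>2 \<le> (L * norm (z - h))\<^sup>2"
      using F6 by (intro power_mono) auto
    ultimately show ?thesis by (simp add: power_mult_distrib)
  qed
  have C3': "\<gamma>\<^sup>2 * (norm (a - F h))\<^sup>2 \<le> \<gamma>\<^sup>2 * (2 * L\<^sup>2 * (norm (z - h))\<^sup>2 + 2 * (norm (a - F z))\<^sup>2)"
    using C3 by (intro mult_left_mono) auto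
  have C4: "- (2 * \<gamma> * (v \<bullet> (x' - xt))) \<le> 2 * \<gamma>\<^sup>2 * (norm v)\<^sup>2"
  proof -
    have "- (v \<bullet> (x' - xt)) \<le> norm v * norm (x' - xt)"
      using Cauchy_Schwarz_ineq2[of v "x' - xt"] by linarith
    also have "\<dots> \<le> norm v * (\<gamma> * norm v)" using F4 by (intro mult_left_mono) auto
    finally have "- (v \<bullet> (x' - xt)) \<le> \<gamma> * (norm v)\<^sup>2" by (simp add: power2_eq_square algebra_simps)
    then have "2 * \<gamma> * (- (v \<bullet> (x' - xt))) \<le> 2 * \<gamma> * (\<gamma> * (norm v)\<^sup>2)"
      using gp by (intro mult_left_mono) auto
    then show ?thesis by (simp add: power2_eq_square algebra_simps)
  qed
  have D2: "2 * \<gamma> * (F h \<bullet> (y - h)) \<le> - (2 * \<gamma> * (F y \<bullet> (h - y)))"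
  proof -
    have "F h \<bullet> (y - h) \<le> - (F y \<bullet> (h - y))"
      using F7 by (simp add: inner_diff_left inner_diff_right inner_commute algebra_simps)
    then have "\<gamma> * (F h \<bullet> (y - h)) \<le> \<gamma> * (- (F y \<bullet> (h - y)))"
      using gp by (intro mult_left_mono) auto
    then show ?thesis by linarith
  qed
  have E1: "2 * \<gamma> * (v \<bullet> (y - u)) \<le> (norm (u - y))\<^sup>2 - (norm (u' - y))\<^sup>2 + \<gamma>\<^sup>2 * (norm v)\<^sup>2"
  proof -
    have eqv: "u + \<gamma> *\<^sub>R v - y = (u - y) + \<gamma> *\<^sub>R v" by (simp add: algebra_simps)
    have "(norm (u' - y))\<^sup>2 \<le> (norm ((u - y) + \<gamma> *\<^sub>R v))\<^sup>2" using F5 unfolding eqv by (intro power_mono) auto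
    moreover have "(norm ((u - y) + \<gamma> *\<^sub>R v))\<^sup>2 = (norm (u - y))\<^sup>2 + 2 * (\<gamma> * (v \<bullet> (u - y))) + \<gamma>\<^sup>2 * (norm v)\<^sup>2"
    proof -
      have "(norm ((u - y) + \<gamma> *\<^sub>R v))\<^sup>2 = (norm (u - y))\<^sup>2 + 2 * ((u - y) \<bullet> (\<gamma> *\<^sub>R v)) + (norm (\<gamma> *\<^sub>R v))\<^sup>2"
        by (rule norm_add_sq)
      moreover have "(u - y) \<bullet> (\<gamma> *\<^sub>R v) = \<gamma> * (v \<bullet> (u - y))" by (simp add: inner_commute)
      moreover have "(norm (\<gamma> *\<^sub>R v))\<^sup>2 = \<gamma>\<^sup>2 * (norm v)\<^sup>2" by (simp only: norm_scaleR power_mult_distrib power2_abs)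
      ultimately show ?thesis by simp
    qed
    moreover have "2 * \<gamma> * (v \<bullet> (y - u)) = - (2 * (\<gamma> * (v \<bullet> (u - y))))" by (simp add: inner_diff_right algebra_simps)
    ultimately show ?thesis by linarith
  qed
  have E2: "2 * \<gamma> * (v \<bullet> (y - h)) - 2 * \<gamma> * (v \<bullet> (xt - h)) = 2 * \<gamma> * (v \<bullet> (y - u)) + 2 * \<gamma> * (v \<bullet> (u - xt))"
    by (simp add: inner_diff_right algebra_simps)
  have "(norm (x' - y))\<^sup>2 \<le> (norm (z - y))\<^sup>2 + (norm (u - y))\<^sup>2 - (norm (u' - y))\<^sup>2
        + (2 * \<gamma>\<^sup>2 * L\<^sup>2 - 1) * (norm (z - h))\<^sup>2 + 2 * \<gamma>\<^sup>2 * (norm (a - F z))\<^sup>2 + 3 * \<gamma>\<^sup>2 * (norm v)\<^sup>2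
        - 2 * \<gamma> * (F y \<bullet> (h - y)) + 2 * \<gamma> * (v \<bullet> (u - xt))"
    using A B AB C2 C3' C4 D2 E1 E2 by (simp add: algebra_simps)
  then show ?thesis unfolding x'_def[symmetric] xt_def[symmetric] v_def[symmetric] u'_def[symmetric]
    by simp
qed


lemma comp_sq_int:
  fixes f :: "'o \<Rightarrow> 'a::euclidean_space"
  assumes "integrable M (\<lambda>\<omega>. (norm (f \<omega>))\<^sup>2)" "f \<in> borel_measurable M" "b \<in> Basis"
  shows "integrable M (\<lambda>\<omega>. (f \<omega> \<bullet> b)\<^sup>2)"
proof (rule Bochner_Integration.integrable_bound[OF assms(1)])
  show "(\<lambda>\<omega>. (f \<omega> \<bullet> b)\<^sup>2) \<in> borel_measurable M" using assms(2) by measurable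
  show "AE \<omega> in M. norm ((f \<omega> \<bullet> b)\<^sup>2) \<le> norm ((norm (f \<omega>))\<^sup>2)"
  proof (rule AE_I2)
    fix \<omega>
    have "\<bar>f \<omega> \<bullet> b\<bar> \<le> norm (f \<omega>)" using Basis_le_norm[OF assms(3)] .
    then have "\<bar>f \<omega> \<bullet> b\<bar>\<^sup>2 \<le> (norm (f \<omega>))\<^sup>2" by (rule power_mono) simp
    then show "norm ((f \<omega> \<bullet> b)\<^sup>2) \<le> norm ((norm (f \<omega>))\<^sup>2)" by (simp add: power2_abs)
  qed
qed

lemma inner_sq_int:
  fixes f g :: "'o \<Rightarrow> 'a::euclidean_space"
  assumes "integrable M (\<lambda>\<omega>. (norm (f \<omega>))\<^sup>2)" "f \<in> borel_measurable M"
    "integrable M (\<lambda>\<omega>. (norm (g \<omega>))\<^sup>2)" "g \<in> borel_measurable M"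
  shows "integrable M (\<lambda>\<omega>. f \<omega> \<bullet> g \<omega>)"
proof -
  have "integrable M (\<lambda>\<omega>. \<Sum>b\<in>Basis. (f \<omega> \<bullet> b) * (g \<omega> \<bullet> b))"
    using assms by (intro Bochner_Integration.integrable_sum sq_int_mult comp_sq_int) auto
  moreover have "(\<lambda>\<omega>. \<Sum>b\<in>Basis. (f \<omega> \<bullet> b) * (g \<omega> \<bullet> b)) = (\<lambda>\<omega>. f \<omega> \<bullet> g \<omega>)"
    by (rule ext, rule euclidean_inner[symmetric])
  ultimately show ?thesis by simp
qed

lemma mean_inner_zero:
  fixes e :: "nat \<Rightarrow> 'o \<Rightarrow> 'a::euclidean_space" and Y :: "'o \<Rightarrow> 'a"
  assumes M: "prob_space M" and sub: "subalgebra M F"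
    and nc: "noise_cond M F \<nu>1 \<nu>2 n e Z"
    and esq: "\<And>j. j < n \<Longrightarrow> integrable M (\<lambda>\<omega>. (norm (e j \<omega>))\<^sup>2)"
    and Y: "Y \<in> borel_measurable F" and Ysq: "integrable M (\<lambda>\<omega>. (norm (Y \<omega>))\<^sup>2)"
  shows "integrable M (\<lambda>\<omega>. ((1 / real n) *\<^sub>R (\<Sum>j<n. e j \<omega>)) \<bullet> Y \<omega>)"
    and "(\<integral>\<omega>. ((1 / real n) *\<^sub>R (\<Sum>j<n. e j \<omega>)) \<bullet> Y \<omega> \<partial>M) = 0"
proof -
  interpret P: prob_space M by fact
  interpret S: finite_measure_subalgebra M F by unfold_locales (fact sub)
  have YM[measurable]: "Y \<in> borel_measurable M" using measurable_from_subalg[OF sub Y] .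
  have eM[measurable]: "e j \<in> borel_measurable M" if "j < n" for j
    using nc that unfolding noise_cond_def by auto
  have pw: "((1 / real n) *\<^sub>R (\<Sum>j<n. e j \<omega>)) \<bullet> Y \<omega> = (1 / real n) * (\<Sum>j<n. e j \<omega> \<bullet> Y \<omega>)" for \<omega>
    by (simp add: inner_sum_left)
  have jI: "integrable M (\<lambda>\<omega>. e j \<omega> \<bullet> Y \<omega>)" if "j < n" for j
    using inner_sq_int[OF esq[OF that] eM[OF that] Ysq YM] .
  have j0: "(\<integral>\<omega>. e j \<omega> \<bullet> Y \<omega> \<partial>M) = 0" if j: "j < n" for j
  proof -
    have "(\<integral>\<omega>. e j \<omega> \<bullet> Y \<omega> \<partial>M) = (\<integral>\<omega>. (\<Sum>b\<in>Basis. (Y \<omega> \<bullet> b) * (e j \<omega> \<bullet> b)) \<partial>M)"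
    proof (rule Bochner_Integration.integral_cong[OF refl])
      fix \<omega>
      show "e j \<omega> \<bullet> Y \<omega> = (\<Sum>b\<in>Basis. (Y \<omega> \<bullet> b) * (e j \<omega> \<bullet> b))"
        by (subst euclidean_inner) (simp add: mult.commute)
    qed
    also have "\<dots> = (\<Sum>b\<in>Basis. (\<integral>\<omega>. (Y \<omega> \<bullet> b) * (e j \<omega> \<bullet> b) \<partial>M))"
      using esq[OF j] Ysq
      by (intro Bochner_Integration.integral_sum sq_int_mult comp_sq_int) (auto simp: j)
    also have "\<dots> = 0"
    proof (intro sum.neutral ballI)
      fix b :: 'a assume b: "b \<in> Basis"
      have m0: "AE \<omega> in M. real_cond_exp M F (\<lambda>\<omega>. e j \<omega> \<bullet> b) \<omega> = 0"
        using nc j b unfolding noise_cond_def by auto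
      have pI: "integrable M (\<lambda>\<omega>. (Y \<omega> \<bullet> b) * (e j \<omega> \<bullet> b))"
        using esq[OF j] Ysq b by (intro sq_int_mult comp_sq_int) (auto simp: j)
      have "(\<integral>\<omega>. (Y \<omega> \<bullet> b) * (e j \<omega> \<bullet> b) \<partial>M) = (\<integral>\<omega>. (Y \<omega> \<bullet> b) * real_cond_exp M F (\<lambda>\<omega>. e j \<omega> \<bullet> b) \<omega> \<partial>M)"
        by (rule S.real_cond_exp_intg(2)[symmetric, OF pI]) (use Y j in auto)
      also have "\<dots> = 0"
        using m0 by (subst integral_cong_AE[where g="\<lambda>_. 0"]) (auto elim: AE_mp)
      finally show "(\<integral>\<omega>. (Y \<omega> \<bullet> b) * (e j \<omega> \<bullet> b) \<partial>M) = 0" .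
    qed
    finally show ?thesis .
  qed
  have sI: "integrable M (\<lambda>\<omega>. (\<Sum>j<n. e j \<omega> \<bullet> Y \<omega>))"
    by (intro Bochner_Integration.integrable_sum jI) auto
  show "integrable M (\<lambda>\<omega>. ((1 / real n) *\<^sub>R (\<Sum>j<n. e j \<omega>)) \<bullet> Y \<omega>)"
    unfolding pw using sI by simp
  have "(\<integral>\<omega>. ((1 / real n) *\<^sub>R (\<Sum>j<n. e j \<omega>)) \<bullet> Y \<omega> \<partial>M) = (1 / real n) * (\<Sum>j<n. (\<integral>\<omega>. e j \<omega> \<bullet> Y \<omega> \<partial>M))"
    unfolding pw using jI by (simp add: Bochner_Integration.integral_sum)
  also have "\<dots> = 0" using j0 by simp
  finally show "(\<integral>\<omega>. ((1 / real n) *\<^sub>R (\<Sum>j<n. e j \<omega>)) \<bullet> Y \<omega> \<partial>M) = 0" .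
qed


lemma sq4_le: "((a::real) + b + c + d)\<^sup>2 \<le> 4 * (a\<^sup>2 + b\<^sup>2 + c\<^sup>2 + d\<^sup>2)"
proof -
  have "0 \<le> (a - b)\<^sup>2 + (a - c)\<^sup>2 + (a - d)\<^sup>2 + (b - c)\<^sup>2 + (b - d)\<^sup>2 + (c - d)\<^sup>2" by simp
  then show ?thesis by (simp add: power2_eq_square algebra_simps)
qed

context vsse begin

lemma L_nonneg: "L \<ge> 0" by (rule lipschitz_on_nonneg[OF A1_lip])

definition "DX = (SOME D. D > 0 \<and> (\<forall>u\<in>X. \<forall>v\<in>X. (norm (u - v))\<^sup>2 \<le> D\<^sup>2))"
lemma DX_props: "DX > 0 \<and> (\<forall>u\<in>X. \<forall>v\<in>X. (norm (u - v))\<^sup>2 \<le> DX\<^sup>2)"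
  unfolding DX_def using someI_ex[OF X_diam] by blast
lemma DX_pos: "DX > 0" using DX_props by blast
lemma DX_le: "u \<in> X \<Longrightarrow> v \<in> X \<Longrightarrow> norm (u - v) \<le> DX"
  using DX_props DX_pos by (meson less_imp_le power2_le_imp_le)

definition "RX = norm pX + DX"
lemma RX: "y \<in> X \<Longrightarrow> norm y \<le> RX"
  unfolding RX_def using DX_le[of y pX] pX norm_triangle_sub[of y pX] by linarith
lemma RX_nonneg: "RX \<ge> 0" using RX[OF pX] norm_ge_zero[of pX] by linarith

definition "FB = norm (F pX) + L * DX"
lemma FB: "y \<in> X \<Longrightarrow> norm (F y) \<le> FB"
proof -
  assume y: "y \<in> X"
  have "norm (F y - F pX) \<le> L * norm (y - pX)" by (rule lipschitz_on_normD[OF A1_lip]) auto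
  also have "\<dots> \<le> L * DX" using DX_le[OF y pX] L_nonneg by (intro mult_left_mono) auto
  finally show ?thesis unfolding FB_def using norm_triangle_sub[of "F y" "F pX"] by linarith
qed
lemma FB_nonneg: "FB \<ge> 0" using FB[OF pX] norm_ge_zero[of "F pX"] by linarith

lemma xh_in: "\<omega> \<in> space M \<Longrightarrow> xh k \<omega> \<in> X"
  using xh_eq closest_point_in_set[OF X_closed X_ne] by simp
lemma uu_in: "uu k \<omega> \<in> X"
  by (cases k) (auto simp: pX closest_point_in_set[OF X_closed X_ne])

lemma Ck_convex: "convex (Ck k \<omega>)" unfolding Ck_def by (simp add: inner_diff_right convex_halfspace_le)
lemma Ck_closed: "closed (Ck k \<omega>)" unfolding Ck_def by (simp add: inner_diff_right closed_halfspace_le)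
lemma X_Ck: "\<omega> \<in> space M \<Longrightarrow> y \<in> X \<Longrightarrow> y \<in> Ck k \<omega>"
  unfolding Ck_def cc_def using closest_point_dot[OF X_convex X_closed, of y "x k \<omega> - \<gamma> *\<^sub>R aa k \<omega>"]
  by (simp add: xh_eq)
lemma Ck_ne: "\<omega> \<in> space M \<Longrightarrow> Ck k \<omega> \<noteq> {}" using X_Ck[OF _ pX] by auto

definition "gh = (\<lambda>(z, w). Fs z w - F z)"
lemma gh_meas: "gh \<in> borel_measurable (borel \<Otimes>\<^sub>M P)"
proof -
  have "gh = (\<lambda>p. (\<lambda>(z, w). Fs z w) p - F (fst p))" unfolding gh_def by (auto simp: fun_eq_iff)
  moreover have "(\<lambda>p. (\<lambda>(z, w). Fs z w) p - F (fst p)) \<in> borel_measurable (borel \<Otimes>\<^sub>M P)"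
    by (intro borel_measurable_diff Fs_meas measurable_compose[OF measurable_fst F_borel])
  ultimately show ?thesis by simp
qed

lemma avg_sub: fixes f :: "nat \<Rightarrow> 'a" and c :: 'a shows "(1 / real (N k)) *\<^sub>R (\<Sum>j<N k. f j - c) = (1 / real (N k)) *\<^sub>R (\<Sum>j<N k. f j) - c"
proof -
  have "(\<Sum>j<N k. f j - c) = (\<Sum>j<N k. f j) - real (N k) *\<^sub>R c"
    by (simp add: sum_subtractf sum_constant_scaleR)
  moreover have "real (N k) \<noteq> 0" using N_pos[of k] by simp
  ultimately show ?thesis by (simp add: scaleR_diff_right)
qed

lemma vv_alt: "vv k \<omega> = (1 / real (N k)) *\<^sub>R (\<Sum>j<N k. gh (xh k \<omega>, sh j k \<omega>))"
  unfolding vv_def bb_def gh_def by (simp add: avg_sub)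
lemma ww_alt: "ww k \<omega> = (1 / real (N k)) *\<^sub>R (\<Sum>j<N k. gh (x k \<omega>, s j k \<omega>))"
  unfolding ww_def aa_def gh_def by (simp add: avg_sub)

lemma nc_half: "noise_cond M (HH k) \<nu>1 \<nu>2 (N k) (\<lambda>j \<omega>. gh (xh k \<omega>, sh j k \<omega>)) (xh k)"
  using A4_half[of k] unfolding gh_def by simp
lemma nc_k: "noise_cond M (GG k) \<nu>1 \<nu>2 (N k) (\<lambda>j \<omega>. gh (x k \<omega>, s j k \<omega>)) (x k)"
  using A4_k[of k] unfolding gh_def by simp

lemma xh_sq: "integrable M (\<lambda>\<omega>. (norm (xh k \<omega>))\<^sup>2)"
proof -
  interpret P: prob_space M by (rule M_prob)
  show ?thesis
  proof (rule P.integrable_const_bound[where B="RX\<^sup>2"])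
    show "AE \<omega> in M. norm ((norm (xh k \<omega>))\<^sup>2) \<le> RX\<^sup>2"
      using RX[OF xh_in] by (auto intro!: AE_I2 power_mono)
  qed measurable
qed

lemma xh_sq_int: "(\<integral>\<omega>. (norm (xh k \<omega>))\<^sup>2 \<partial>M) \<le> RX\<^sup>2"
proof -
  interpret P: prob_space M by (rule M_prob)
  have "(\<integral>\<omega>. (norm (xh k \<omega>))\<^sup>2 \<partial>M) \<le> (\<integral>\<omega>. RX\<^sup>2 \<partial>M)"
    using RX[OF xh_in] by (intro integral_mono xh_sq) (auto intro: power_mono)
  then show ?thesis by (simp add: P.prob_space)
qed

lemma vv_var: "integrable M (\<lambda>\<omega>. (norm (vv k \<omega>))\<^sup>2)"
  "(\<integral>\<omega>. (norm (vv k \<omega>))\<^sup>2 \<partial>M) \<le> (\<nu>1\<^sup>2 * RX\<^sup>2 + \<nu>2\<^sup>2) / real (N k)"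
proof -
  note bv = batch_var[OF M_prob subH xh_measH sh_meas A4_indep_half N_pos gh_meas nc_half xh_sq, of k]
  show "integrable M (\<lambda>\<omega>. (norm (vv k \<omega>))\<^sup>2)" using bv(1) by (simp add: vv_alt)
  have "(\<integral>\<omega>. (norm (vv k \<omega>))\<^sup>2 \<partial>M) \<le> (\<nu>1\<^sup>2 * (\<integral>\<omega>. (norm (xh k \<omega>))\<^sup>2 \<partial>M) + \<nu>2\<^sup>2) / real (N k)"
    using bv(2) by (simp add: vv_alt)
  also have "\<dots> \<le> (\<nu>1\<^sup>2 * RX\<^sup>2 + \<nu>2\<^sup>2) / real (N k)"
    using xh_sq_int[of k] N_pos[of k] by (intro divide_right_mono add_right_mono mult_left_mono) auto
  finally show "(\<integral>\<omega>. (norm (vv k \<omega>))\<^sup>2 \<partial>M) \<le> (\<nu>1\<^sup>2 * RX\<^sup>2 + \<nu>2\<^sup>2) / real (N k)" .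
qed

lemma ww_var:
  assumes "integrable M (\<lambda>\<omega>. (norm (x k \<omega>))\<^sup>2)"
  shows "integrable M (\<lambda>\<omega>. (norm (ww k \<omega>))\<^sup>2)"
    "(\<integral>\<omega>. (norm (ww k \<omega>))\<^sup>2 \<partial>M) \<le> (\<nu>1\<^sup>2 * (\<integral>\<omega>. (norm (x k \<omega>))\<^sup>2 \<partial>M) + \<nu>2\<^sup>2) / real (N k)"
proof -
  note bv = batch_var[OF M_prob subG x_measG s_meas A4_indep_k N_pos gh_meas nc_k assms]
  show "integrable M (\<lambda>\<omega>. (norm (ww k \<omega>))\<^sup>2)" using bv(1) by (simp add: ww_alt)
  show "(\<integral>\<omega>. (norm (ww k \<omega>))\<^sup>2 \<partial>M) \<le> (\<nu>1\<^sup>2 * (\<integral>\<omega>. (norm (x k \<omega>))\<^sup>2 \<partial>M) + \<nu>2\<^sup>2) / real (N k)"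
    using bv(2) by (simp add: ww_alt)
qed

end


context vsse begin

lemma cpC_bound: "\<omega> \<in> space M \<Longrightarrow> norm (closest_point (Ck k \<omega>) z) \<le> 2 * RX + norm z"
proof -
  assume \<omega>: "\<omega> \<in> space M"
  have "dist (closest_point (Ck k \<omega>) z) (closest_point (Ck k \<omega>) pX) \<le> dist z pX"
    by (rule closest_point_lipschitz[OF Ck_convex Ck_closed Ck_ne[OF \<omega>]])
  moreover have "closest_point (Ck k \<omega>) pX = pX" by (rule closest_point_self[OF X_Ck[OF \<omega> pX]])
  ultimately have "norm (closest_point (Ck k \<omega>) z - pX) \<le> norm (z - pX)" by (simp add: dist_norm)
  moreover have "norm (z - pX) \<le> norm z + RX" using norm_triangle_ineq4[of z pX] RX[OF pX] by linarith
  moreover have "norm (closest_point (Ck k \<omega>) z) \<le> norm (closest_point (Ck k \<omega>) z - pX) + norm pX"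
    using norm_triangle_sub[of "closest_point (Ck k \<omega>) z" pX] by (simp add: add.commute)
  ultimately show ?thesis using RX[OF pX] by linarith
qed

lemma bb_bound: "\<omega> \<in> space M \<Longrightarrow> norm (bb k \<omega>) \<le> norm (vv k \<omega>) + FB"
proof -
  assume \<omega>: "\<omega> \<in> space M"
  have "bb k \<omega> = vv k \<omega> + F (xh k \<omega>)" unfolding vv_def by simp
  then have "norm (bb k \<omega>) \<le> norm (vv k \<omega>) + norm (F (xh k \<omega>))" by (simp add: norm_triangle_ineq)
  then show ?thesis using FB[OF xh_in[OF \<omega>, of k]] by linarith
qed

lemma sq_bound_int:
  fixes f :: "'o \<Rightarrow> 'a" and g :: "'o \<Rightarrow> real"
  assumes "f \<in> borel_measurable M" "integrable M (\<lambda>\<omega>. (g \<omega>)\<^sup>2)" "g \<in> borel_measurable M"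
    and "\<And>\<omega>. \<omega> \<in> space M \<Longrightarrow> norm (f \<omega>) \<le> c1 + g \<omega>" "c1 \<ge> 0" "\<And>\<omega>. g \<omega> \<ge> 0"
  shows "integrable M (\<lambda>\<omega>. (norm (f \<omega>))\<^sup>2)"
proof -
  interpret P: prob_space M by (rule M_prob)
  show ?thesis
  proof (rule Bochner_Integration.integrable_bound[where f="\<lambda>\<omega>. 2 * c1\<^sup>2 + 2 * (g \<omega>)\<^sup>2"])
    show "integrable M (\<lambda>\<omega>. 2 * c1\<^sup>2 + 2 * (g \<omega>)\<^sup>2)" using assms(2) by auto
    show "(\<lambda>\<omega>. (norm (f \<omega>))\<^sup>2) \<in> borel_measurable M" using assms(1) by measurable
    show "AE \<omega> in M. norm ((norm (f \<omega>))\<^sup>2) \<le> norm (2 * c1\<^sup>2 + 2 * (g \<omega>)\<^sup>2)"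
    proof (rule AE_I2)
      fix \<omega> assume \<omega>: "\<omega> \<in> space M"
      have "(norm (f \<omega>))\<^sup>2 \<le> (c1 + g \<omega>)\<^sup>2" using assms(4)[OF \<omega>] by (intro power_mono) auto
      also have "\<dots> \<le> 2 * c1\<^sup>2 + 2 * (g \<omega>)\<^sup>2" using sq_sum_le[of c1 "g \<omega>"] by simp
      finally show "norm ((norm (f \<omega>))\<^sup>2) \<le> norm (2 * c1\<^sup>2 + 2 * (g \<omega>)\<^sup>2)" by simp
    qed
  qed
qed

lemma x_sq: "integrable M (\<lambda>\<omega>. (norm (x k \<omega>))\<^sup>2)"
proof (induction k)
  case 0
  interpret P: prob_space M by (rule M_prob)
  have "integrable M (\<lambda>\<omega>. (norm x0)\<^sup>2)" by simp
  moreover have "\<And>\<omega>. \<omega> \<in> space M \<Longrightarrow> (norm x0)\<^sup>2 = (norm (x 0 \<omega>))\<^sup>2" by (simp add: x_init)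
  ultimately show ?case
    using Bochner_Integration.integrable_cong[where M=M and N=M and f="\<lambda>\<omega>. (norm x0)\<^sup>2" and g="\<lambda>\<omega>. (norm (x 0 \<omega>))\<^sup>2"]
    by simp
next
  case (Suc k)
  have vsq: "integrable M (\<lambda>\<omega>. (norm (vv k \<omega>))\<^sup>2)" by (rule vv_var)
  have gI: "integrable M (\<lambda>\<omega>. (norm (x k \<omega>) + \<gamma> * norm (vv k \<omega>))\<^sup>2)"
  proof (rule Bochner_Integration.integrable_bound[where f="\<lambda>\<omega>. 2 * (norm (x k \<omega>))\<^sup>2 + 2 * \<gamma>\<^sup>2 * (norm (vv k \<omega>))\<^sup>2"])
    show "integrable M (\<lambda>\<omega>. 2 * (norm (x k \<omega>))\<^sup>2 + 2 * \<gamma>\<^sup>2 * (norm (vv k \<omega>))\<^sup>2)"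
      using Suc vsq by auto
    show "(\<lambda>\<omega>. (norm (x k \<omega>) + \<gamma> * norm (vv k \<omega>))\<^sup>2) \<in> borel_measurable M" by measurable
    show "AE \<omega> in M. norm ((norm (x k \<omega>) + \<gamma> * norm (vv k \<omega>))\<^sup>2)
        \<le> norm (2 * (norm (x k \<omega>))\<^sup>2 + 2 * \<gamma>\<^sup>2 * (norm (vv k \<omega>))\<^sup>2)"
    proof (rule AE_I2)
      fix \<omega>
      have "(norm (x k \<omega>) + \<gamma> * norm (vv k \<omega>))\<^sup>2 \<le> 2 * (norm (x k \<omega>))\<^sup>2 + 2 * \<gamma>\<^sup>2 * (norm (vv k \<omega>))\<^sup>2"
        using sq_sum_le[of "norm (x k \<omega>)" "\<gamma> * norm (vv k \<omega>)"] by (simp add: power_mult_distrib)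
      then show "norm ((norm (x k \<omega>) + \<gamma> * norm (vv k \<omega>))\<^sup>2)
        \<le> norm (2 * (norm (x k \<omega>))\<^sup>2 + 2 * \<gamma>\<^sup>2 * (norm (vv k \<omega>))\<^sup>2)" by simp
    qed
  qed
  show ?case
  proof (rule sq_bound_int[OF x_meas gI _ _ _ _])
    fix \<omega> assume \<omega>: "\<omega> \<in> space M"
    have "norm (x (Suc k) \<omega>) \<le> 2 * RX + norm (x k \<omega> - \<gamma> *\<^sub>R bb k \<omega>)"
      unfolding x_eq[OF \<omega>] by (rule cpC_bound[OF \<omega>])
    also have "norm (x k \<omega> - \<gamma> *\<^sub>R bb k \<omega>) \<le> norm (x k \<omega>) + \<gamma> * norm (bb k \<omega>)"
      using norm_triangle_ineq4[of "x k \<omega>" "\<gamma> *\<^sub>R bb k \<omega>"] gamma_pos by simp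
    also have "\<gamma> * norm (bb k \<omega>) \<le> \<gamma> * (norm (vv k \<omega>) + FB)"
      using bb_bound[OF \<omega>] gamma_pos by (intro mult_left_mono) auto
    finally show "norm (x (Suc k) \<omega>) \<le> (2 * RX + \<gamma> * FB) + (norm (x k \<omega>) + \<gamma> * norm (vv k \<omega>))"
      by (simp add: algebra_simps)
  qed (use RX_nonneg FB_nonneg gamma_pos in \<open>auto intro!: add_nonneg_nonneg mult_nonneg_nonneg\<close>)
qed

lemma xt_sq: "integrable M (\<lambda>\<omega>. (norm (xt k \<omega>))\<^sup>2)"
proof (rule sq_bound_int[OF xt_meas x_sq _ _ _ _])
  fix \<omega> assume \<omega>: "\<omega> \<in> space M"
  have "norm (xt k \<omega>) \<le> 2 * RX + norm (x k \<omega> - \<gamma> *\<^sub>R F (xh k \<omega>))"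
    unfolding xt_def by (rule cpC_bound[OF \<omega>])
  also have "norm (x k \<omega> - \<gamma> *\<^sub>R F (xh k \<omega>)) \<le> norm (x k \<omega>) + \<gamma> * norm (F (xh k \<omega>))"
    using norm_triangle_ineq4[of "x k \<omega>" "\<gamma> *\<^sub>R F (xh k \<omega>)"] gamma_pos by simp
  also have "\<gamma> * norm (F (xh k \<omega>)) \<le> \<gamma> * FB"
    using FB[OF xh_in[OF \<omega>]] gamma_pos by (intro mult_left_mono) auto
  finally show "norm (xt k \<omega>) \<le> (2 * RX + \<gamma> * FB) + norm (x k \<omega>)" by (simp add: algebra_simps)
qed (use RX_nonneg FB_nonneg gamma_pos in \<open>auto intro!: add_nonneg_nonneg mult_nonneg_nonneg\<close>)

end


context vsse begin

lemma diff_sq_bound: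
  assumes f: "f \<in> borel_measurable M" "integrable M (\<lambda>\<omega>. (norm (f \<omega>))\<^sup>2)"
    and g: "g \<in> borel_measurable M" "\<And>\<omega>. \<omega> \<in> space M \<Longrightarrow> g \<omega> \<in> X"
  shows "integrable M (\<lambda>\<omega>. (norm (f \<omega> - g \<omega>))\<^sup>2)"
proof (rule sq_bound_int[where ?c1.0=RX and g="\<lambda>\<omega>. norm (f \<omega>)"])
  show "(\<lambda>\<omega>. f \<omega> - g \<omega>) \<in> borel_measurable M" using f g by measurable
  show "integrable M (\<lambda>\<omega>. (norm (f \<omega>))\<^sup>2)" by fact
  show "(\<lambda>\<omega>. norm (f \<omega>)) \<in> borel_measurable M" using f by measurable
  fix \<omega> assume w: "\<omega> \<in> space M"
  show "norm (f \<omega> - g \<omega>) \<le> RX + norm (f \<omega>)"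
    using norm_triangle_ineq4[of "f \<omega>" "g \<omega>"] RX[OF g(2)[OF w]] by linarith
qed (use RX_nonneg in auto)

lemma vv_inner_zero:
  "integrable M (\<lambda>\<omega>. vv k \<omega> \<bullet> (uu k \<omega> - xt k \<omega>))"
  "(\<integral>\<omega>. vv k \<omega> \<bullet> (uu k \<omega> - xt k \<omega>) \<partial>M) = 0"
proof -
  have esq: "integrable M (\<lambda>\<omega>. (norm (gh (xh k \<omega>, sh j k \<omega>)))\<^sup>2)" if "j < N k" for j
    using noise_sq(1)[OF M_prob subH nc_half that xh_meas xh_sq] .
  have Y: "(\<lambda>\<omega>. uu k \<omega> - xt k \<omega>) \<in> borel_measurable (HH k)"
    by (intro borel_measurable_diff uu_measH xt_measH)
  have Ysq: "integrable M (\<lambda>\<omega>. (norm (uu k \<omega> - xt k \<omega>))\<^sup>2)"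
  proof -
    have "integrable M (\<lambda>\<omega>. (norm (xt k \<omega> - uu k \<omega>))\<^sup>2)"
      by (rule diff_sq_bound[OF xt_meas xt_sq uu_meas uu_in])
    then show ?thesis by (simp add: norm_minus_commute)
  qed
  note mz = mean_inner_zero[OF M_prob subH nc_half esq Y Ysq]
  show "integrable M (\<lambda>\<omega>. vv k \<omega> \<bullet> (uu k \<omega> - xt k \<omega>))" using mz(1) by (simp add: vv_alt)
  show "(\<integral>\<omega>. vv k \<omega> \<bullet> (uu k \<omega> - xt k \<omega>) \<partial>M) = 0" using mz(2) by (simp add: vv_alt)
qed

definition "Q k \<omega> = (2 * \<gamma>\<^sup>2 * L\<^sup>2 - 1) * (norm (x k \<omega> - xh k \<omega>))\<^sup>2 + 2 * \<gamma>\<^sup>2 * (norm (ww k \<omega>))\<^sup>2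
    + 3 * \<gamma>\<^sup>2 * (norm (vv k \<omega>))\<^sup>2 + 2 * \<gamma> * (vv k \<omega> \<bullet> (uu k \<omega> - xt k \<omega>))"

lemma xxh_sq: "integrable M (\<lambda>\<omega>. (norm (x k \<omega> - xh k \<omega>))\<^sup>2)"
  by (rule diff_sq_bound[OF x_meas x_sq xh_meas xh_in])

lemma Q_int: "integrable M (Q k)"
  unfolding Q_def[abs_def]
  using xxh_sq ww_var(1)[OF x_sq] vv_var(1) vv_inner_zero(1) by auto

lemma coef_le: "2 * \<gamma>\<^sup>2 * L\<^sup>2 + 4 * \<gamma>\<^sup>2 * \<nu>1\<^sup>2 * (1 / real (N k)) \<le> 1"
proof -
  define n0 where "n0 = real (N 0)"
  have n0: "n0 \<ge> 1" unfolding n0_def using N_pos[of 0] by simp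
  have nk: "real (N k) \<ge> n0" unfolding n0_def using N_mono by (simp add: mono_def)
  have a0: "L\<^sup>2 + 4 * \<nu>1\<^sup>2 / n0 \<ge> 0" using n0 by simp
  have "(\<gamma> * (sqrt 2 * sqrt (L\<^sup>2 + 4 * \<nu>1\<^sup>2 / n0)))\<^sup>2 \<le> 1\<^sup>2"
    using gamma_le gamma_pos a0 unfolding n0_def[symmetric] by (intro power_mono) auto
  then have "\<gamma>\<^sup>2 * (2 * (L\<^sup>2 + 4 * \<nu>1\<^sup>2 / n0)) \<le> 1"
    using a0 by (simp add: power_mult_distrib)
  moreover have "4 * \<nu>1\<^sup>2 * (1 / real (N k)) \<le> 8 * \<nu>1\<^sup>2 / n0"
  proof -
    have "1 / real (N k) \<le> 1 / n0" using nk n0 by (intro divide_left_mono) auto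
    then have "4 * \<nu>1\<^sup>2 * (1 / real (N k)) \<le> 4 * \<nu>1\<^sup>2 * (1 / n0)" by (intro mult_left_mono) auto
    also have "\<dots> \<le> 8 * \<nu>1\<^sup>2 / n0" using n0 by (simp add: field_simps)
    finally show ?thesis .
  qed
  then have "\<gamma>\<^sup>2 * (4 * \<nu>1\<^sup>2 * (1 / real (N k))) \<le> \<gamma>\<^sup>2 * (8 * \<nu>1\<^sup>2 / n0)" by (intro mult_left_mono) auto
  ultimately show ?thesis by (simp add: algebra_simps)
qed

lemma Q_bound: "(\<integral>\<omega>. Q k \<omega> \<partial>M) \<le> 7 * \<gamma>\<^sup>2 * (\<nu>1\<^sup>2 * RX\<^sup>2 + \<nu>2\<^sup>2) * (1 / real (N k))"
proof -
  interpret P: prob_space M by (rule M_prob)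
  define t where "t = 1 / real (N k)"
  have t0: "t > 0" unfolding t_def using N_pos[of k] by simp
  define E1 where "E1 = (\<integral>\<omega>. (norm (x k \<omega> - xh k \<omega>))\<^sup>2 \<partial>M)"
  define EW where "EW = (\<integral>\<omega>. (norm (ww k \<omega>))\<^sup>2 \<partial>M)"
  define EV where "EV = (\<integral>\<omega>. (norm (vv k \<omega>))\<^sup>2 \<partial>M)"
  define EXX where "EXX = (\<integral>\<omega>. (norm (x k \<omega>))\<^sup>2 \<partial>M)"
  have E1_0: "E1 \<ge> 0" unfolding E1_def by (rule integral_nonneg_AE) auto
  have h1: "(\<integral>\<omega>. Q k \<omega> \<partial>M) = (2 * \<gamma>\<^sup>2 * L\<^sup>2 - 1) * E1 + 2 * \<gamma>\<^sup>2 * EW + 3 * \<gamma>\<^sup>2 * EV"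
    unfolding Q_def E1_def EW_def EV_def
    using xxh_sq ww_var(1)[OF x_sq] vv_var(1) vv_inner_zero by simp
  have h2: "EW \<le> (\<nu>1\<^sup>2 * EXX + \<nu>2\<^sup>2) * t"
    using ww_var(2)[OF x_sq] unfolding EW_def EXX_def t_def by simp
  have h3: "EXX \<le> 2 * E1 + 2 * RX\<^sup>2"
  proof -
    have "EXX \<le> (\<integral>\<omega>. 2 * (norm (x k \<omega> - xh k \<omega>))\<^sup>2 + 2 * RX\<^sup>2 \<partial>M)"
      unfolding EXX_def
    proof (rule integral_mono)
      show "integrable M (\<lambda>\<omega>. (norm (x k \<omega>))\<^sup>2)" by (rule x_sq)
      show "integrable M (\<lambda>\<omega>. 2 * (norm (x k \<omega> - xh k \<omega>))\<^sup>2 + 2 * RX\<^sup>2)" using xxh_sq by simp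
      fix \<omega> assume \<omega>: "\<omega> \<in> space M"
      have "(norm (x k \<omega>))\<^sup>2 = (norm ((x k \<omega> - xh k \<omega>) + xh k \<omega>))\<^sup>2" by simp
      also have "\<dots> \<le> 2 * (norm (x k \<omega> - xh k \<omega>))\<^sup>2 + 2 * (norm (xh k \<omega>))\<^sup>2" by (rule sq_sum_le)
      also have "(norm (xh k \<omega>))\<^sup>2 \<le> RX\<^sup>2" using RX[OF xh_in[OF \<omega>]] by (intro power_mono) auto
      finally show "(norm (x k \<omega>))\<^sup>2 \<le> 2 * (norm (x k \<omega> - xh k \<omega>))\<^sup>2 + 2 * RX\<^sup>2" by simp
    qed
    also have "\<dots> = 2 * E1 + 2 * RX\<^sup>2" unfolding E1_def using xxh_sq by (simp add: P.prob_space)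
    finally show ?thesis .
  qed
  have h4: "EV \<le> (\<nu>1\<^sup>2 * RX\<^sup>2 + \<nu>2\<^sup>2) * t" using vv_var(2) unfolding EV_def t_def by simp
  have h2': "2 * \<gamma>\<^sup>2 * EW \<le> 2 * \<gamma>\<^sup>2 * ((\<nu>1\<^sup>2 * (2 * E1 + 2 * RX\<^sup>2) + \<nu>2\<^sup>2) * t)"
  proof -
    have "(\<nu>1\<^sup>2 * EXX + \<nu>2\<^sup>2) * t \<le> (\<nu>1\<^sup>2 * (2 * E1 + 2 * RX\<^sup>2) + \<nu>2\<^sup>2) * t"
      using h3 t0 by (intro mult_right_mono add_right_mono mult_left_mono) auto
    then show ?thesis using h2 by (intro mult_left_mono) auto
  qed
  have h4': "3 * \<gamma>\<^sup>2 * EV \<le> 3 * \<gamma>\<^sup>2 * ((\<nu>1\<^sup>2 * RX\<^sup>2 + \<nu>2\<^sup>2) * t)" using h4 by (intro mult_left_mono) auto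
  have h5: "(2 * \<gamma>\<^sup>2 * L\<^sup>2 + 4 * \<gamma>\<^sup>2 * \<nu>1\<^sup>2 * t - 1) * E1 \<le> 0"
    using coef_le[of k] E1_0 unfolding t_def by (intro mult_nonpos_nonneg) auto
  have h6: "\<gamma>\<^sup>2 * \<nu>2\<^sup>2 * t \<ge> 0" using t0 by simp
  have "(\<integral>\<omega>. Q k \<omega> \<partial>M) \<le> 7 * \<gamma>\<^sup>2 * (\<nu>1\<^sup>2 * RX\<^sup>2 + \<nu>2\<^sup>2) * t"
    using h1 h2' h4' h5 h6 by (simp add: algebra_simps)
  then show ?thesis unfolding t_def .
qed

end


lemma gap_facts:
  fixes X :: "'a::euclidean_space set" and F :: "'a \<Rightarrow> 'a"
  assumes Xne: "X \<noteq> {}" and FB: "\<And>y. y \<in> X \<Longrightarrow> norm (F y) \<le> B" and RX: "\<And>y. y \<in> X \<Longrightarrow> norm y \<le> R"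
  shows gap_upper: "\<And>z y. y \<in> X \<Longrightarrow> F y \<bullet> (z - y) \<le> B * (norm z + R)"
    and gap_bdd: "\<And>z. bdd_above ((\<lambda>y. F y \<bullet> (z - y)) ` X)"
    and gap_ge: "\<And>z y. y \<in> X \<Longrightarrow> F y \<bullet> (z - y) \<le> gap X F z"
    and gap_le: "\<And>z c. (\<And>y. y \<in> X \<Longrightarrow> F y \<bullet> (z - y) \<le> c) \<Longrightarrow> gap X F z \<le> c"
    and gap_abs: "\<And>z. \<bar>gap X F z\<bar> \<le> B * (norm z + R)"
    and gap_lip: "\<And>z z'. gap X F z \<le> gap X F z' + B * norm (z - z')"
    and gap_meas: "gap X F \<in> borel_measurable borel"
proof -
  obtain p where p: "p \<in> X" using Xne by auto
  have B0: "B \<ge> 0" using FB[OF p] norm_ge_zero[of "F p"] by linarith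
  show up: "F y \<bullet> (z - y) \<le> B * (norm z + R)" if y: "y \<in> X" for z y
  proof -
    have "F y \<bullet> (z - y) \<le> norm (F y) * norm (z - y)" using Cauchy_Schwarz_ineq2[of "F y" "z - y"] by linarith
    also have "\<dots> \<le> B * (norm z + R)"
    proof (rule mult_mono)
      show "norm (F y) \<le> B" by (rule FB[OF y])
      show "norm (z - y) \<le> norm z + R" using norm_triangle_ineq4[of z y] RX[OF y] by linarith
    qed (use B0 in auto)
    finally show ?thesis .
  qed
  show bdd: "bdd_above ((\<lambda>y. F y \<bullet> (z - y)) ` X)" for z
    using up by (intro bdd_aboveI2[where M="B * (norm z + R)"]) auto
  show ge: "F y \<bullet> (z - y) \<le> gap X F z" if "y \<in> X" for z y
    unfolding gap_def by (rule cSUP_upper[OF that bdd])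
  show le: "gap X F z \<le> c" if "\<And>y. y \<in> X \<Longrightarrow> F y \<bullet> (z - y) \<le> c" for z c
    unfolding gap_def by (rule cSUP_least[OF Xne that])
  show "\<bar>gap X F z\<bar> \<le> B * (norm z + R)" for z
  proof -
    have "gap X F z \<le> B * (norm z + R)" by (rule le[OF up])
    moreover have "- (B * (norm z + R)) \<le> F p \<bullet> (z - p)"
    proof -
      have "\<bar>F p \<bullet> (z - p)\<bar> \<le> norm (F p) * norm (z - p)" by (rule Cauchy_Schwarz_ineq2)
      also have "\<dots> \<le> B * (norm z + R)"
      proof (rule mult_mono)
        show "norm (F p) \<le> B" by (rule FB[OF p])
        show "norm (z - p) \<le> norm z + R" using norm_triangle_ineq4[of z p] RX[OF p] by linarith
      qed (use B0 in auto)
      finally show ?thesis by linarith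
    qed
    moreover have "F p \<bullet> (z - p) \<le> gap X F z" by (rule ge[OF p])
    ultimately show ?thesis by linarith
  qed
  show lip: "gap X F z \<le> gap X F z' + B * norm (z - z')" for z z'
  proof (rule le)
    fix y assume y: "y \<in> X"
    have "F y \<bullet> (z - y) = F y \<bullet> (z' - y) + F y \<bullet> (z - z')" by (simp add: inner_diff_right)
    also have "F y \<bullet> (z - z') \<le> norm (F y) * norm (z - z')"
      using Cauchy_Schwarz_ineq2[of "F y" "z - z'"] by linarith
    also have "\<dots> \<le> B * norm (z - z')" using FB[OF y] by (intro mult_right_mono) auto
    also have "F y \<bullet> (z' - y) \<le> gap X F z'" by (rule ge[OF y])
    finally show "F y \<bullet> (z - y) \<le> gap X F z' + B * norm (z - z')" by simp
  qed
  have "B-lipschitz_on UNIV (gap X F)"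
  proof (rule lipschitz_onI)
    fix z z' :: 'a
    have "gap X F z - gap X F z' \<le> B * norm (z - z')" using lip[of z z'] by simp
    moreover have "gap X F z' - gap X F z \<le> B * norm (z - z')" using lip[of z' z] by (simp add: norm_minus_commute)
    ultimately show "dist (gap X F z) (gap X F z') \<le> B * dist z z'" by (simp add: dist_norm abs_le_iff)
  qed (rule B0)
  then show "gap X F \<in> borel_measurable borel"
    by (intro borel_measurable_continuous_onI lipschitz_on_continuous_on)
qed

context vsse begin

definition "Phi k \<omega> y = (norm (x k \<omega> - y))\<^sup>2 + (norm (uu k \<omega> - y))\<^sup>2"

lemma step_k:
  assumes \<omega>: "\<omega> \<in> space M" and y: "y \<in> X"
  shows "2 * \<gamma> * (F y \<bullet> (xh k \<omega> - y)) \<le> Phi k \<omega> y - Phi (Suc k) \<omega> y + Q k \<omega>"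
proof -
  have h: "xh k \<omega> = closest_point X (x k \<omega> - \<gamma> *\<^sub>R aa k \<omega>)" by (rule xh_eq[OF \<omega>])
  have C: "Ck k \<omega> = {y. (x k \<omega> - \<gamma> *\<^sub>R aa k \<omega> - xh k \<omega>) \<bullet> (y - xh k \<omega>) \<le> 0}"
    unfolding Ck_def cc_def ..
  note si = step_ineq[OF X_convex X_closed X_ne A1_lip A1_mono gamma_pos h C y, of "uu k \<omega>" "bb k \<omega>"]
  have e1: "closest_point (Ck k \<omega>) (x k \<omega> - \<gamma> *\<^sub>R bb k \<omega>) = x (Suc k) \<omega>" using x_eq[OF \<omega>] by simp
  have e2: "closest_point X (uu k \<omega> + \<gamma> *\<^sub>R (bb k \<omega> - F (xh k \<omega>))) = uu (Suc k) \<omega>" by (simp add: vv_def)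
  have e3: "closest_point (Ck k \<omega>) (x k \<omega> - \<gamma> *\<^sub>R F (xh k \<omega>)) = xt k \<omega>" by (simp add: xt_def)
  have e4: "aa k \<omega> - F (x k \<omega>) = ww k \<omega>" "bb k \<omega> - F (xh k \<omega>) = vv k \<omega>" by (simp_all add: ww_def vv_def)
  show ?thesis using si unfolding e1 e2 e3 e4 Phi_def Q_def by (simp add: algebra_simps)
qed

lemma telescope:
  assumes \<omega>: "\<omega> \<in> space M" and y: "y \<in> X"
  shows "2 * \<gamma> * (\<Sum>k<K. F y \<bullet> (xh k \<omega> - y)) \<le> Phi 0 \<omega> y - Phi K \<omega> y + (\<Sum>k<K. Q k \<omega>)"
proof (induction K)
  case 0
  then show ?case by simp
next
  case (Suc K)
  have "2 * \<gamma> * (\<Sum>k<Suc K. F y \<bullet> (xh k \<omega> - y)) = 2 * \<gamma> * (\<Sum>k<K. F y \<bullet> (xh k \<omega> - y)) + 2 * \<gamma> * (F y \<bullet> (xh K \<omega> - y))"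
    by (simp add: algebra_simps)
  also have "\<dots> \<le> (Phi 0 \<omega> y - Phi K \<omega> y + (\<Sum>k<K. Q k \<omega>)) + (Phi K \<omega> y - Phi (Suc K) \<omega> y + Q K \<omega>)"
    using Suc step_k[OF \<omega> y, of K] by linarith
  also have "\<dots> = Phi 0 \<omega> y - Phi (Suc K) \<omega> y + (\<Sum>k<Suc K. Q k \<omega>)" by simp
  finally show ?case .
qed

definition "Phib = (norm (x0 - pX) + DX)\<^sup>2 + DX\<^sup>2"

lemma Phi0_le: "\<omega> \<in> space M \<Longrightarrow> y \<in> X \<Longrightarrow> Phi 0 \<omega> y \<le> Phib"
proof -
  assume \<omega>: "\<omega> \<in> space M" and y: "y \<in> X"
  have "norm (x0 - y) \<le> norm (x0 - pX) + norm (pX - y)"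
    using norm_triangle_ineq[of "x0 - pX" "pX - y"] by simp
  also have "norm (pX - y) \<le> DX" by (rule DX_le[OF pX y])
  finally have "(norm (x0 - y))\<^sup>2 \<le> (norm (x0 - pX) + DX)\<^sup>2" by (intro power_mono) auto
  moreover have "(norm (pX - y))\<^sup>2 \<le> DX\<^sup>2" using DX_le[OF pX y] by (intro power_mono) auto
  ultimately show ?thesis unfolding Phi_def Phib_def using x_init[OF \<omega>] by simp
qed

lemma Phi_nonneg: "Phi k \<omega> y \<ge> 0" unfolding Phi_def by simp

abbreviation "xbar K \<omega> \<equiv> (1 / real K) *\<^sub>R (\<Sum>k<K. xh k \<omega>)"

lemma gap_path:
  assumes \<omega>: "\<omega> \<in> space M" and K: "K \<ge> 1"
  shows "gap X F (xbar K \<omega>) \<le> (Phib + (\<Sum>k<K. Q k \<omega>)) / (2 * \<gamma> * real K)"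
proof (rule gap_le[OF X_ne FB RX])
  fix y assume y: "y \<in> X"
  have Kp: "real K > 0" using K by simp
  have "xbar K \<omega> - y = (1 / real K) *\<^sub>R (\<Sum>k<K. xh k \<omega> - y)"
    using Kp by (simp add: sum_subtractf sum_constant_scaleR scaleR_diff_right)
  then have "F y \<bullet> (xbar K \<omega> - y) = (\<Sum>k<K. F y \<bullet> (xh k \<omega> - y)) / real K"
    by (simp add: inner_sum_right)
  moreover have "2 * \<gamma> * (\<Sum>k<K. F y \<bullet> (xh k \<omega> - y)) \<le> Phib + (\<Sum>k<K. Q k \<omega>)"
    using telescope[OF \<omega> y, of K] Phi0_le[OF \<omega> y] Phi_nonneg[of K \<omega> y] by linarith
  moreover have "(\<Sum>k<K. F y \<bullet> (xh k \<omega> - y)) / real K = (2 * \<gamma> * (\<Sum>k<K. F y \<bullet> (xh k \<omega> - y))) / (2 * \<gamma> * real K)"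
    using gamma_pos by simp
  moreover have "(2 * \<gamma> * (\<Sum>k<K. F y \<bullet> (xh k \<omega> - y))) / (2 * \<gamma> * real K) \<le> (Phib + (\<Sum>k<K. Q k \<omega>)) / (2 * \<gamma> * real K)"
    using calculation(2) Kp gamma_pos by (intro divide_right_mono) auto
  ultimately show "F y \<bullet> (xbar K \<omega> - y) \<le> (Phib + (\<Sum>k<K. Q k \<omega>)) / (2 * \<gamma> * real K)"
    by simp
qed

lemma sumN_le: "\<exists>Mb. \<forall>K\<ge>1. (\<Sum>k<K. 1 / real (N k)) \<le> 1 + Mb"
proof -
  obtain Mb where Mb: "\<And>K. (\<Sum>k=1..K. 1 / real (N k)) < Mb" using N_sum by blast
  have "(\<Sum>k<K. 1 / real (N k)) \<le> 1 + Mb" if "K \<ge> 1" for K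
  proof -
    have "Suc 0 \<le> K" using that by simp
    then obtain n where n: "K = Suc n" using Suc_le_D by blast
    have "(\<Sum>k<K. 1 / real (N k)) = 1 / real (N 0) + (\<Sum>i<n. 1 / real (N (Suc i)))"
      unfolding n by (rule sum.lessThan_Suc_shift)
    also have "(\<Sum>i<n. 1 / real (N (Suc i))) = (\<Sum>k=Suc 0..n. 1 / real (N k))"
      by (rule sum.atLeast1_atMost_eq[symmetric])
    finally have eq: "(\<Sum>k<K. 1 / real (N k)) = 1 / real (N 0) + (\<Sum>k=Suc 0..n. 1 / real (N k))" .
    have "1 / real (N 0) \<le> 1" using N_pos[of 0] by simp
    moreover have "(\<Sum>k=Suc 0..n. 1 / real (N k)) < Mb" using Mb[of n] by simp
    ultimately show ?thesis unfolding eq by linarith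
  qed
  then show ?thesis by blast
qed

lemma xbar_meas: "(\<lambda>\<omega>. xbar K \<omega>) \<in> borel_measurable M"
  by (intro borel_measurable_scaleR borel_measurable_const borel_measurable_sum xh_meas)

lemma xbar_norm: "\<omega> \<in> space M \<Longrightarrow> K \<ge> 1 \<Longrightarrow> norm (xbar K \<omega>) \<le> RX"
proof -
  assume \<omega>: "\<omega> \<in> space M" and K: "K \<ge> 1"
  have "norm (xbar K \<omega>) = (1 / real K) * norm (\<Sum>k<K. xh k \<omega>)" by simp
  also have "\<dots> \<le> (1 / real K) * (\<Sum>k<K. norm (xh k \<omega>))" by (intro mult_left_mono norm_sum) auto
  also have "\<dots> \<le> (1 / real K) * (\<Sum>k<K. RX)" using RX[OF xh_in[OF \<omega>]] by (intro mult_left_mono sum_mono) auto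
  also have "\<dots> = RX" using K by simp
  finally show ?thesis .
qed

lemma main_a: "\<exists>c. \<forall>K\<ge>1.
            integrable M (\<lambda>\<omega>. gap X F ((1 / real K) *\<^sub>R (\<Sum>k<K. xh k \<omega>))) \<and>
            (\<integral>\<omega>. gap X F ((1 / real K) *\<^sub>R (\<Sum>k<K. xh k \<omega>)) \<partial>M) \<le> c / real K"
proof -
  interpret P: prob_space M by (rule M_prob)
  obtain Mb where Mb: "\<And>K. K \<ge> 1 \<Longrightarrow> (\<Sum>k<K. 1 / real (N k)) \<le> 1 + Mb" using sumN_le by blast
  define c1 where "c1 = 7 * \<gamma>\<^sup>2 * (\<nu>1\<^sup>2 * RX\<^sup>2 + \<nu>2\<^sup>2)"
  have c1: "c1 \<ge> 0" unfolding c1_def by simp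
  define c where "c = (Phib + c1 * (1 + Mb)) / (2 * \<gamma>)"
  have gm: "(\<lambda>\<omega>. gap X F (xbar K \<omega>)) \<in> borel_measurable M" for K
    by (rule measurable_compose[OF xbar_meas gap_meas[OF X_ne FB RX]])
  have "integrable M (\<lambda>\<omega>. gap X F (xbar K \<omega>)) \<and> (\<integral>\<omega>. gap X F (xbar K \<omega>) \<partial>M) \<le> c / real K"
    if K: "K \<ge> 1" for K
  proof
    have Kp: "real K > 0" using K by simp
    show gI: "integrable M (\<lambda>\<omega>. gap X F (xbar K \<omega>))"
    proof (rule P.integrable_const_bound[where B="FB * (RX + RX)"])
      show "AE \<omega> in M. norm (gap X F (xbar K \<omega>)) \<le> FB * (RX + RX)"
      proof (rule AE_I2)
        fix \<omega> assume \<omega>: "\<omega> \<in> space M"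
        have "\<bar>gap X F (xbar K \<omega>)\<bar> \<le> FB * (norm (xbar K \<omega>) + RX)" by (rule gap_abs[OF X_ne FB RX])
        also have "\<dots> \<le> FB * (RX + RX)" using xbar_norm[OF \<omega> K] FB_nonneg by (intro mult_left_mono) auto
        finally show "norm (gap X F (xbar K \<omega>)) \<le> FB * (RX + RX)" by simp
      qed
    qed (rule gm)
    have QI: "integrable M (\<lambda>\<omega>. (Phib + (\<Sum>k<K. Q k \<omega>)) / (2 * \<gamma> * real K))"
    proof -
      have "integrable M (\<lambda>\<omega>. Phib + (\<Sum>k<K. Q k \<omega>))"
        by (intro Bochner_Integration.integrable_add Bochner_Integration.integrable_sum Q_int) auto
      then show ?thesis by (rule integrable_divide_zero)
    qed
    have "(\<integral>\<omega>. gap X F (xbar K \<omega>) \<partial>M) \<le> (\<integral>\<omega>. (Phib + (\<Sum>k<K. Q k \<omega>)) / (2 * \<gamma> * real K) \<partial>M)"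
      by (rule integral_mono[OF gI QI gap_path[OF _ K]])
    also have "\<dots> = (Phib + (\<Sum>k<K. (\<integral>\<omega>. Q k \<omega> \<partial>M))) / (2 * \<gamma> * real K)"
    proof -
      have sI: "integrable M (\<lambda>\<omega>. \<Sum>k<K. Q k \<omega>)"
        by (intro Bochner_Integration.integrable_sum Q_int)
      have "(\<integral>\<omega>. (Phib + (\<Sum>k<K. Q k \<omega>)) / (2 * \<gamma> * real K) \<partial>M)
          = (\<integral>\<omega>. Phib + (\<Sum>k<K. Q k \<omega>) \<partial>M) / (2 * \<gamma> * real K)"
        by (rule integral_divide_zero)
      also have "(\<integral>\<omega>. Phib + (\<Sum>k<K. Q k \<omega>) \<partial>M) = Phib + (\<integral>\<omega>. (\<Sum>k<K. Q k \<omega>) \<partial>M)"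
        using sI by (simp add: P.prob_space)
      also have "(\<integral>\<omega>. (\<Sum>k<K. Q k \<omega>) \<partial>M) = (\<Sum>k<K. (\<integral>\<omega>. Q k \<omega> \<partial>M))"
        by (rule Bochner_Integration.integral_sum) (rule Q_int)
      finally show ?thesis .
    qed
    also have "\<dots> \<le> (Phib + c1 * (1 + Mb)) / (2 * \<gamma> * real K)"
    proof (rule divide_right_mono)
      have "(\<Sum>k<K. (\<integral>\<omega>. Q k \<omega> \<partial>M)) \<le> (\<Sum>k<K. c1 * (1 / real (N k)))"
        using Q_bound unfolding c1_def by (intro sum_mono) auto
      also have "\<dots> = c1 * (\<Sum>k<K. 1 / real (N k))" by (simp add: sum_distrib_left)
      also have "\<dots> \<le> c1 * (1 + Mb)" using Mb[OF K] c1 by (intro mult_left_mono) auto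
      finally show "Phib + (\<Sum>k<K. (\<integral>\<omega>. Q k \<omega> \<partial>M)) \<le> Phib + c1 * (1 + Mb)" by simp
    qed (use gamma_pos Kp in auto)
    also have "\<dots> = c / real K" unfolding c_def using gamma_pos Kp by (simp add: field_simps)
    finally show "(\<integral>\<omega>. gap X F (xbar K \<omega>) \<partial>M) \<le> c / real K" .
  qed
  then show ?thesis by blast
qed

end


lemma part_b:
  fixes E :: "nat \<Rightarrow> real" and N :: "nat \<Rightarrow> nat"
  assumes c: "\<forall>K\<ge>1. E K \<le> c / real K" and a: "a > 1" and N: "\<forall>k. N k = max 1 (nat \<lfloor>real k powr a\<rfloor>)"
  shows "\<exists>\<epsilon>0>0. \<exists>c'. \<forall>\<epsilon>. 0 < \<epsilon> \<and> \<epsilon> \<le> \<epsilon>0 \<longrightarrow>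
           (\<exists>K\<ge>1. E K \<le> \<epsilon> \<and> real (\<Sum>k=1..K. N k) \<le> c' / \<epsilon> powr (a + 1))"
proof -
  define C where "C = max c 1"
  have C1: "C \<ge> 1" unfolding C_def by simp
  have "\<forall>\<epsilon>. 0 < \<epsilon> \<and> \<epsilon> \<le> 1 \<longrightarrow>
           (\<exists>K\<ge>1. E K \<le> \<epsilon> \<and> real (\<Sum>k=1..K. N k) \<le> (2 * C) powr (a + 1) / \<epsilon> powr (a + 1))"
  proof (intro allI impI)
    fix \<epsilon> :: real assume e: "0 < \<epsilon> \<and> \<epsilon> \<le> 1"
    then have e0: "\<epsilon> > 0" and e1: "\<epsilon> \<le> 1" by auto
    have Ce: "C / \<epsilon> \<ge> 1" using C1 e0 e1 by (simp add: field_simps)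
    define K where "K = nat \<lceil>C / \<epsilon>\<rceil>"
    have KC: "real K \<ge> C / \<epsilon>" unfolding K_def using Ce by linarith
    have KC2: "real K \<le> C / \<epsilon> + 1" unfolding K_def using Ce by linarith
    have K1: "K \<ge> 1" using KC Ce by linarith
    have Kp: "real K > 0" using K1 by simp
    have "E K \<le> c / real K" using c K1 by blast
    also have "\<dots> \<le> C / real K" unfolding C_def using Kp by (intro divide_right_mono) auto
    also have "\<dots> \<le> \<epsilon>" using KC Kp e0 C1 by (simp add: field_simps)
    finally have EK: "E K \<le> \<epsilon>" .
    have Nk: "real (N k) \<le> real K powr a" if k: "k \<in> {1..K}" for k
    proof -
      have "real (nat \<lfloor>real k powr a\<rfloor>) \<le> real k powr a"
        by (simp add: of_nat_nat)
      also have "\<dots> \<le> real K powr a" using k a by (intro powr_mono2) auto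
      finally have "real (nat \<lfloor>real k powr a\<rfloor>) \<le> real K powr a" .
      moreover have "1 \<le> real K powr a" using K1 a by (intro ge_one_powr_ge_zero) auto
      ultimately show ?thesis using N by (simp add: max_def)
    qed
    have "real (\<Sum>k=1..K. N k) = (\<Sum>k=1..K. real (N k))" by simp
    also have "\<dots> \<le> (\<Sum>k=1..K. real K powr a)" using Nk by (rule sum_mono)
    also have "\<dots> = real K * real K powr a" by simp
    also have "\<dots> = real K powr (a + 1)" using Kp by (simp add: powr_add)
    also have "\<dots> \<le> (2 * C / \<epsilon>) powr (a + 1)"
    proof (rule powr_mono2)
      have "2 * C / \<epsilon> = C / \<epsilon> + C / \<epsilon>" by simp
      then show "real K \<le> 2 * C / \<epsilon>" using KC2 Ce by linarith
    qed (use a Kp in auto)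
    also have "\<dots> = (2 * C) powr (a + 1) / \<epsilon> powr (a + 1)"
      using C1 e0 by (simp add: powr_divide)
    finally show "\<exists>K\<ge>1. E K \<le> \<epsilon> \<and> real (\<Sum>k=1..K. N k) \<le> (2 * C) powr (a + 1) / \<epsilon> powr (a + 1)"
      using K1 EK by blast
  qed
  then show ?thesis by (intro exI[of _ 1] conjI exI) auto
qed


theorem proposition2:
  fixes X :: "'a::euclidean_space set"
    and F :: "'a \<Rightarrow> 'a"
    and Fs :: "'a \<Rightarrow> 'w \<Rightarrow> 'a"
    and P :: "'w measure"
    and M :: "'o measure"
    and s sh :: "nat \<Rightarrow> nat \<Rightarrow> 'o \<Rightarrow> 'w"
    and N :: "nat \<Rightarrow> nat"
    and x xh :: "nat \<Rightarrow> 'o \<Rightarrow> 'a"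
    and x0 :: 'a
    and L \<gamma> \<nu>1 \<nu>2 :: real
  assumes X_ne: "X \<noteq> {}" and X_closed: "closed X" and X_convex: "convex X"
    and X_diam: "\<exists>D>0. \<forall>u\<in>X. \<forall>v\<in>X. (norm (u - v))\<^sup>2 \<le> D\<^sup>2"
    \<comment> \<open>sampled map and its mean\<close>
    and P_prob: "prob_space P"
    and Fs_meas: "(\<lambda>(z, w). Fs z w) \<in> borel_measurable (borel \<Otimes>\<^sub>M P)"
    and F_mean: "\<And>z. integrable P (Fs z) \<and> F z = (\<integral>w. Fs z w \<partial>P)"
    \<comment> \<open>(A1)\<close>
    and A1_lip: "L-lipschitz_on UNIV F" and A1_mono: "monotone_map F"
    \<comment> \<open>(A2)\<close>
    and A2_ne: "vi_sol X F \<noteq> {}" and A2_compact: "compact (vi_sol X F)"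
    and A2_bound: "\<exists>C>0. \<forall>xs\<in>vi_sol X F. norm (F xs) \<le> C"
    \<comment> \<open>samples\<close>
    and M_prob: "prob_space M"
    and s_meas: "\<And>j k. s j k \<in> measurable M P" and sh_meas: "\<And>j k. sh j k \<in> measurable M P"
    and s_distr: "\<And>j k. distr M P (s j k) = P" and sh_distr: "\<And>j k. distr M P (sh j k) = P"
    \<comment> \<open>(A4)\<close>
    and nu_nonneg: "\<nu>1 \<ge> 0" "\<nu>2 \<ge> 0"
    and A4_k: "\<And>k. noise_cond M (hist M P N s sh k) \<nu>1 \<nu>2 (N k)
                  (\<lambda>j \<omega>. Fs (x k \<omega>) (s j k \<omega>) - F (x k \<omega>)) (x k)"
    and A4_half: "\<And>k. noise_cond M (hist_half M P N s sh k) \<nu>1 \<nu>2 (N k)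
                  (\<lambda>j \<omega>. Fs (xh k \<omega>) (sh j k \<omega>) - F (xh k \<omega>)) (xh k)"
    and A4_indep_k: "\<And>k. cond_indep M (hist M P N s sh k) P {..<N k} (\<lambda>j. s j k)"
    and A4_indep_half: "\<And>k. cond_indep M (hist_half M P N s sh k) P {..<N k} (\<lambda>j. sh j k)"
    \<comment> \<open>batch sizes and step size\<close>
    and N_pos: "\<And>k. N k \<ge> 1" and N_mono: "mono N"
    and N_sum: "\<exists>Mb. \<forall>K. (\<Sum>k=1..K. 1 / real (N k)) < Mb"
    and gamma_pos: "\<gamma> > 0"
    and gamma_le: "\<gamma> * (sqrt 2 * sqrt (L\<^sup>2 + 4 * \<nu>1\<^sup>2 / real (N 0))) \<le> 1"
    \<comment> \<open>the scheme (v-SSE)\<close>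
    and x_init: "\<And>\<omega>. \<omega> \<in> space M \<Longrightarrow> x 0 \<omega> = x0"
    and xh_step: "\<And>k \<omega>. \<omega> \<in> space M \<Longrightarrow>
        xh k \<omega> = closest_point X
          (x k \<omega> - \<gamma> *\<^sub>R ((1 / real (N k)) *\<^sub>R (\<Sum>j<N k. Fs (x k \<omega>) (s j k \<omega>))))"
    and x_step: "\<And>k \<omega>. \<omega> \<in> space M \<Longrightarrow>
        x (Suc k) \<omega> = closest_point
          {y. (x k \<omega> - \<gamma> *\<^sub>R ((1 / real (N k)) *\<^sub>R (\<Sum>j<N k. Fs (x k \<omega>) (s j k \<omega>))) - xh k \<omega>)
                \<bullet> (y - xh k \<omega>) \<le> 0}
          (x k \<omega> - \<gamma> *\<^sub>R ((1 / real (N k)) *\<^sub>R (\<Sum>j<N k. Fs (xh k \<omega>) (sh j k \<omega>))))"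
  shows "(\<exists>c. \<forall>K\<ge>1.
            integrable M (\<lambda>\<omega>. gap X F ((1 / real K) *\<^sub>R (\<Sum>k<K. xh k \<omega>))) \<and>
            (\<integral>\<omega>. gap X F ((1 / real K) *\<^sub>R (\<Sum>k<K. xh k \<omega>)) \<partial>M) \<le> c / real K)
       \<and> (\<forall>a>1. (\<forall>k. N k = max 1 (nat \<lfloor>real k powr a\<rfloor>)) \<longrightarrow>
            (\<exists>\<epsilon>0>0. \<exists>c. \<forall>\<epsilon>. 0 < \<epsilon> \<and> \<epsilon> \<le> \<epsilon>0 \<longrightarrow>
               (\<exists>K\<ge>1. (\<integral>\<omega>. gap X F ((1 / real K) *\<^sub>R (\<Sum>k<K. xh k \<omega>)) \<partial>M) \<le> \<epsilon> \<and>
                       real (\<Sum>k=1..K. N k) \<le> c / \<epsilon> powr (a + 1))))"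
  proof -
  interpret vsse X F Fs P M s sh N x xh x0 L \<gamma> \<nu>1 \<nu>2
    using assms by (rule vsse.intro)
  obtain c where c: "\<forall>K\<ge>1.
            integrable M (\<lambda>\<omega>. gap X F ((1 / real K) *\<^sub>R (\<Sum>k<K. xh k \<omega>))) \<and>
            (\<integral>\<omega>. gap X F ((1 / real K) *\<^sub>R (\<Sum>k<K. xh k \<omega>)) \<partial>M) \<le> c / real K"
    using main_a by blast
  have b: "\<forall>a>1. (\<forall>k. N k = max 1 (nat \<lfloor>real k powr a\<rfloor>)) \<longrightarrow>
            (\<exists>\<epsilon>0>0. \<exists>c. \<forall>\<epsilon>. 0 < \<epsilon> \<and> \<epsilon> \<le> \<epsilon>0 \<longrightarrow>
               (\<exists>K\<ge>1. (\<integral>\<omega>. gap X F ((1 / real K) *\<^sub>R (\<Sum>k<K. xh k \<omega>)) \<partial>M) \<le> \<epsilon> \<and>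
                       real (\<Sum>k=1..K. N k) \<le> c / \<epsilon> powr (a + 1)))"
  proof (intro allI impI)
    fix a :: real assume a: "a > 1" and Nk: "\<forall>k. N k = max 1 (nat \<lfloor>real k powr a\<rfloor>)"
    have cE: "\<forall>K\<ge>1. (\<lambda>K. (\<integral>\<omega>. gap X F ((1 / real K) *\<^sub>R (\<Sum>k<K. xh k \<omega>)) \<partial>M)) K \<le> c / real K"
      using c by simp
    show "\<exists>\<epsilon>0>0. \<exists>c. \<forall>\<epsilon>. 0 < \<epsilon> \<and> \<epsilon> \<le> \<epsilon>0 \<longrightarrow>
               (\<exists>K\<ge>1. (\<integral>\<omega>. gap X F ((1 / real K) *\<^sub>R (\<Sum>k<K. xh k \<omega>)) \<partial>M) \<le> \<epsilon> \<and>
                       real (\<Sum>k=1..K. N k) \<le> c / \<epsilon> powr (a + 1))"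
      using part_b[OF cE a Nk] by simp
  qed
  show ?thesis using c b by blast
qed

end
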